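(* Let $f(x)=\frac1n\sum_{i=1}^n f_i(x)$ with each $f_i:\mathbb{R}^d\to\mathbb{R}$ differentiable, let $x^*$ be a minimizer of $f$, and assume there is $\mu>0$ with $f(x^* )\ge f(x)+\langle\nabla f(x),x^*-x\rangle+\frac{\mu}{2}\|x^*-x\|_2^2$ for all $x\in\mathbb{R}^d$. Let $\mathbf W\succ0$ be a symmetric positive definite $n\times n$ matrix and $\mathcal D$ a distribution of random matrices $\mathbf S\in\mathbb{R}^{n\times\tau}$, and let $\theta_{\mathbf S}$ be a random variable (a function of $\mathbf S$) such that $\mathbb{E}_{\mathcal D}[\theta_{\mathbf S}\Pi_{\mathbf S}e]=e$. Assume there are constants $\mathcal L_1>0$, $\mathcal L_2>0$ with $$\mathbb{E}_{\mathcal D}\|\nabla f_{\mathbf S}(x)-\nabla f_{\mathbf S}(x^* )\|_2^2\le 2\mathcal L_1(f(x)-f(x^* )),\qquad \mathbb{E}_{\mathcal D}\|(\mathbf{G}(x)-\mathbf{G}(x^* ))\Pi_{\mathbf S}\|_{\mathbf W^{-1}}^2\le 2\mathcal L_2(f(x)-f(x^* ))$$ for all $x\in\mathbb{R}^d$. Assume $\kappa>0$, and let $\rho=\lambda_{\max}\big(\mathbf W^{1/2}(\mathbb{E}_{\mathcal D}[\theta_{\mathbf S}^2\Pi_{\mathbf S}ee^\top\Pi_{\mathbf S}^\top]-ee^\top)\mathbf W^{1/2}\big)\ge0$. Choose any $x^0\in\mathbb{R}^d$, $\mathbf J^0\in\mathbb{R}^{d\times n}$, let $\{x^k,\mathbf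 J^k\}$ be the iterates of JacSketch, and let $$\Psi^k=\|x^k-x^*\|_2^2+\frac{\alpha}{2\mathcal L_2}\|\mathbf J^k-\mathbf{G}(x^* )\|_{\mathbf W^{-1}}^2 .$$ If $0\le\alpha\le\min\left\{\frac{1}{4\mathcal L_1},\frac{\kappa}{4\mathcal L_2\rho/n^2+\mu}\right\}$, then $\mathbb{E}[\Psi^k]\le(1-\mu\alpha)^k\Psi^0$ for all $k$. If $\alpha$ equals this upper bound, then $k\ge\max\left\{\frac{4\mathcal L_1}{\mu},\ \frac1\kappa+\frac{4\rho\mathcal L_2}{\kappa\mu n^2}\right\}\log\frac1\epsilon$ implies $\mathbb{E}[\Psi^k]\le\epsilon\Psi^0$.
   Context: $\mathbf{G}(x)=[\nabla f_1(x),\dots,\nabla f_n(x)]\in\mathbb{R}^{d\times n}$ is the Jacobian; $e\in\mathbb{R}^n$ is the all-ones vector; $F(x)=(f_1(x),\dots,f_n(x))^\top$. For $\mathbf X\in\mathbb{R}^{d\times n}$, $\|\mathbf X\|_{\mathbf W^{-1}}=\sqrt{\mathrm{Tr}(\mathbf X\mathbf W^{-1}\mathbf X^\top)}$. $\Pi_{\mathbf S}=\mathbf S(\mathbf S^\top\mathbf W\mathbf S)^\dagger\mathbf S^\top\mathbf W$ ($\dagger$ = Moore–Penrose pseudoinverse), $\mathbf H_{\mathbf S}=\mathbf S(\mathbf S^\top\mathbf W\mathbf S)^\dagger\mathbf S^\top$. $f_{\mathbf S}(x)=\frac{\theta_{\mathbf S}}{n}\langle F(x),\Pi_{\mathbf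 S}e\rangle$, so $\nabla f_{\mathbf S}(x)=\frac{\theta_{\mathbf S}}{n}\mathbf{G}(x)\Pi_{\mathbf S}e$. $\kappa=\lambda_{\min}(\mathbb{E}_{\mathcal D}[\Pi_{\mathbf S}])$ (this matrix is similar to the symmetric matrix $\mathbf W^{1/2}\mathbb{E}[\mathbf H_{\mathbf S}]\mathbf W^{1/2}$). JacSketch with stepsize $\alpha>0$: for $k=0,1,\dots$, sample $\mathbf S_k\sim\mathcal D$ independently of the past, set $\mathbf J^{k+1}=\mathbf J^k+(\mathbf{G}(x^k)-\mathbf J^k)\Pi_{\mathbf S_k}$, $g^k=\frac1n\mathbf J^ke+\frac{\theta_{\mathbf S_k}}{n}(\mathbf{G}(x^k)-\mathbf J^k)\Pi_{\mathbf S_k}e$, $x^{k+1}=x^k-\alpha g^k$. $\mathbb{E}$ is total expectation over the algorithm's randomness. *)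

theory Defs
  imports "HOL-Probability.Probability"
begin

text \<open>Matrices: real^'c^'r is an r x c matrix (vector of rows).\<close>

definition ones :: "real^'n" where "ones = (\<chi> i. 1)"

definition ones_mat :: "real^'n^'n" where "ones_mat = (\<chi> i j. 1)"

definition pinv :: "real^'m^'n \<Rightarrow> real^'n^'m" where
  "pinv A = (THE X. A ** X ** A = A \<and> X ** A ** X = X \<and>
                    transpose (A ** X) = A ** X \<and> transpose (X ** A) = X ** A)"

definition pos_def_mat :: "real^'n^'n \<Rightarrow> bool" where
  "pos_def_mat W \<longleftrightarrow> transpose W = W \<and> (\<forall>v. v \<noteq> 0 \<longrightarrow> 0 < v \<bullet> (W *v v))"

definition msqrt :: "real^'n^'n \<Rightarrow> real^'n^'n" where
  "msqrt W = (THE B. B ** B = W \<and> transpose B = B \<and> (\<forall>v. 0 \<le> v \<bullet> (B *v v)))"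

definition real_eigenvalues :: "real^'n^'n \<Rightarrow> real set" where
  "real_eigenvalues A = {l. \<exists>v. v \<noteq> 0 \<and> A *v v = l *\<^sub>R v}"

definition lambda_min :: "real^'n^'n \<Rightarrow> real" where
  "lambda_min A = Min (real_eigenvalues A)"

definition lambda_max :: "real^'n^'n \<Rightarrow> real" where
  "lambda_max A = Max (real_eigenvalues A)"

definition PiS :: "real^'n^'n \<Rightarrow> real^'t^'n \<Rightarrow> real^'n^'n" where
  "PiS W S = S ** pinv (transpose S ** W ** S) ** transpose S ** W"

definition wnorm :: "real^'n^'n \<Rightarrow> real^'n^'d \<Rightarrow> real" where
  "wnorm W X = sqrt (trace (X ** matrix_inv W ** transpose X))"

text \<open>Jacobian G(x) = [\<nabla>f_1(x), ..., \<nabla>f_n(x)] (d x n) from the gradients.\<close>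
definition jac :: "('n \<Rightarrow> real^'d \<Rightarrow> real^'d) \<Rightarrow> real^'d \<Rightarrow> real^'n^'d" where
  "jac gf x = (\<chi> r c. gf c x $ r)"

text \<open>JacSketch iterates (x^k, J^k) driven by the sample sequence \<omega> (S_k = \<omega> k).\<close>
primrec jacsketch ::
  "real^'n^'n \<Rightarrow> (real^'t^'n \<Rightarrow> real) \<Rightarrow> (real^'d \<Rightarrow> real^'n^'d) \<Rightarrow> real
   \<Rightarrow> real^'d \<Rightarrow> real^'n^'d \<Rightarrow> (nat \<Rightarrow> real^'t^'n) \<Rightarrow> nat \<Rightarrow> (real^'d) \<times> (real^'n^'d)" where
  "jacsketch W \<theta> G \<alpha> x0 J0 \<omega> 0 = (x0, J0)"
| "jacsketch W \<theta> G \<alpha> x0 J0 \<omega> (Suc k) =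
     (let (x, J) = jacsketch W \<theta> G \<alpha> x0 J0 \<omega> k;
          P = PiS W (\<omega> k);
          g = (1 / real CARD('n)) *\<^sub>R (J *v ones)
              + (\<theta> (\<omega> k) / real CARD('n)) *\<^sub>R ((G x - J) ** P *v ones)
      in (x - \<alpha> *\<^sub>R g, J + (G x - J) ** P))"

definition kappa :: "real^'n^'n \<Rightarrow> (real^'t^'n) measure \<Rightarrow> real" where
  "kappa W D = lambda_min (integral\<^sup>L D (\<lambda>S. PiS W S))"

definition rho :: "real^'n^'n \<Rightarrow> (real^'t^'n \<Rightarrow> real) \<Rightarrow> (real^'t^'n) measure \<Rightarrow> real" where
  "rho W \<theta> D = lambda_max (msqrt W **
      (integral\<^sup>L D (\<lambda>S. (\<theta> S)\<^sup>2 *\<^sub>R (PiS W S ** ones_mat ** transpose (PiS W S))) - ones_mat)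
      ** msqrt W)"

definition Psi :: "real^'n^'n \<Rightarrow> (real^'d \<Rightarrow> real^'n^'d) \<Rightarrow> real^'d \<Rightarrow> real \<Rightarrow> real
                   \<Rightarrow> (real^'d) \<times> (real^'n^'d) \<Rightarrow> real" where
  "Psi W G xs \<alpha> L2 s = (norm (fst s - xs))\<^sup>2 + \<alpha> / (2 * L2) * (wnorm W (snd s - G xs))\<^sup>2"

text \<open>Total expectation E[\<Psi>^k]: S_0,...,S_{k-1} are i.i.d. with law D.\<close>
definition EPsi :: "real^'n^'n \<Rightarrow> (real^'t^'n \<Rightarrow> real) \<Rightarrow> (real^'t^'n) measure
                    \<Rightarrow> (real^'d \<Rightarrow> real^'n^'d) \<Rightarrow> real^'d \<Rightarrow> real \<Rightarrow> real
                    \<Rightarrow> real^'d \<Rightarrow> real^'n^'d \<Rightarrow> nat \<Rightarrow> ennreal" where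
  "EPsi W \<theta> D G xs \<alpha> L2 x0 J0 k =
     (\<integral>\<^sup>+ \<omega>. ennreal (Psi W G xs \<alpha> L2 (jacsketch W \<theta> G \<alpha> x0 J0 \<omega> k)) \<partial>(\<Pi>\<^sub>M i\<in>{..<k}. D))"

end

theory Submission
  imports Defs
begin

lemma inner_mv_transpose: "(A *v x) \<bullet> y = x \<bullet> (transpose A *v (y::real^'m))"
  for A :: "real^'n^'m"
  by (metis dot_lmul_matrix inner_commute transpose_matrix_vector)

lemma inner_mv_sym: "transpose A = A \<Longrightarrow> (A *v x) \<bullet> y = x \<bullet> (A *v (y::real^'n))"
  for A :: "real^'n^'n"
  by (metis inner_mv_transpose)

lemma continuous_on_quad: "continuous_on S (\<lambda>w. w \<bullet> (A *v (w::real^'n)))" for A :: "real^'n^'n"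
proof -
  have "bounded_linear (\<lambda>w. A *v w)"
    by (simp add: linear_conv_bounded_linear)
  then have "continuous_on S (\<lambda>w. A *v w)" by (rule linear_continuous_on)
  then show ?thesis by (auto intro!: continuous_intros)
qed

lemma quad_zero_lemma:
  fixes a b :: real
  assumes "\<And>t. 0 \<le> t * a + t\<^sup>2 * b" "0 \<le> b"
  shows "a = 0"
proof -
  define s where "s = b + 1"
  have s0: "s > 0" using assms(2) s_def by simp
  have "0 \<le> (-a/s) * a + (-a/s)\<^sup>2 * b" by (rule assms(1))
  also have "\<dots> = (- a * a * s + a * a * b) / (s * s)"
    using s0 by (simp add: power2_eq_square field_simps)
  also have "- a * a * s + a * a * b = - (a * a)" by (simp add: s_def algebra_simps)
  finally have "0 \<le> - (a * a) / (s * s)" .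
  moreover have "s * s > 0" using s0 by simp
  ultimately have "a * a \<le> 0" by (simp add: divide_le_0_iff)
  then show ?thesis by (auto simp add: mult_le_0_iff)
qed

lemma psd_zero_sub:
  fixes N :: "real^'n^'n"
  assumes sym: "transpose N = N" and V: "subspace V"
    and psd: "\<And>w. w \<in> V \<Longrightarrow> 0 \<le> w \<bullet> (N *v w)"
    and u: "u \<in> V" and uz: "u \<bullet> (N *v u) = 0" and y: "y \<in> V"
  shows "y \<bullet> (N *v u) = 0"
proof -
 have "2 * (y \<bullet> (N *v u)) = 0"
 proof (rule quad_zero_lemma)
  fix t :: real
  have "u + t *\<^sub>R y \<in> V" using V u y by (simp add: subspace_add subspace_scale)
  then have "0 \<le> (u + t *\<^sub>R y) \<bullet> (N *v (u + t *\<^sub>R y))" by (rule psd)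
  also have "\<dots> = u \<bullet> (N *v u) + t * (y \<bullet> (N *v u) + u \<bullet> (N *v y)) + t\<^sup>2 * (y \<bullet> (N *v y))"
    by (simp add: matrix_vector_right_distrib matrix_vector_mult_scaleR inner_add_left inner_add_right
        algebra_simps power2_eq_square)
  also have "u \<bullet> (N *v y) = y \<bullet> (N *v u)"
    using inner_mv_sym[OF sym, of u y] by (simp add: inner_commute)
  finally show "0 \<le> t * (2 * (y \<bullet> (N *v u))) + t\<^sup>2 * (y \<bullet> (N *v y))"
    using uz by (simp add: algebra_simps)
  show "0 \<le> y \<bullet> (N *v y)" using psd y .
 qed
 then show ?thesis by simp
qed

lemma rayleigh_sub:
  fixes A :: "real^'n^'n"
  assumes sym: "transpose A = A" and V: "subspace V" and ne: "V \<noteq> {0}"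
    and inv: "\<And>v. v \<in> V \<Longrightarrow> A *v v \<in> V"
  shows "\<exists>u\<in>V. norm u = 1 \<and> A *v u = (u \<bullet> (A *v u)) *\<^sub>R u \<and>
            (\<forall>w\<in>V. w \<bullet> (A *v w) \<le> (u \<bullet> (A *v u)) * (norm w)\<^sup>2)"
proof -
  let ?S = "V \<inter> sphere 0 1"
  have cS: "compact ?S"
    by (simp add: V closed_subspace closed_Int_compact compact_sphere)
  obtain v where v: "v \<in> V" "v \<noteq> 0" using ne V subspace_0 by blast
  have "v /\<^sub>R norm v \<in> ?S" using v V by (simp add: subspace_scale)
  then have neS: "?S \<noteq> {}" by blast
  obtain u where u: "u \<in> ?S" and umax: "\<And>y. y \<in> ?S \<Longrightarrow> y \<bullet> (A *v y) \<le> u \<bullet> (A *v u)"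
    using continuous_attains_sup[OF cS neS continuous_on_quad] by blast
  define c where "c = u \<bullet> (A *v u)"
  have bound: "w \<bullet> (A *v w) \<le> c * (norm w)\<^sup>2" if w: "w \<in> V" for w
  proof (cases "w = 0")
    case True then show ?thesis by simp
  next
    case False
    have "w /\<^sub>R norm w \<in> ?S" using w False V by (simp add: subspace_scale)
    then have "(w /\<^sub>R norm w) \<bullet> (A *v (w /\<^sub>R norm w)) \<le> c" using umax c_def by blast
    then have "(w \<bullet> (A *v w)) / (norm w)\<^sup>2 \<le> c"
      by (simp add: matrix_vector_mult_scaleR power2_eq_square divide_simps)
    then show ?thesis using False by (simp add: divide_simps mult.commute)
  qed
  define N where "N = c *\<^sub>R mat 1 - A"
  have Nv: "N *v w = c *\<^sub>R w - A *v w" for w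
    by (simp add: N_def matrix_vector_mult_diff_rdistrib scaleR_matrix_vector_assoc[symmetric])
  have symN: "transpose N = N"
    using sym by (simp add: N_def transpose_def vec_eq_iff mat_def)
  have psd: "0 \<le> w \<bullet> (N *v w)" if "w \<in> V" for w
    using bound[OF that] by (simp add: Nv inner_diff_right power2_norm_eq_inner)
  have uV: "u \<in> V" and nu: "norm u = 1" using u by auto
  have uz: "u \<bullet> (N *v u) = 0"
    using nu by (simp add: Nv inner_diff_right c_def power2_norm_eq_inner[symmetric])
  have NuV: "N *v u \<in> V" using uV inv V by (simp add: Nv subspace_diff subspace_scale)
  have "(N *v u) \<bullet> (N *v u) = 0" by (rule psd_zero_sub[OF symN V psd uV uz NuV])
  then have "N *v u = 0" by simp
  then have "A *v u = c *\<^sub>R u" by (simp add: Nv)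
  then show ?thesis using uV nu bound c_def by blast
qed

definition onset :: "(real^'n) set \<Rightarrow> bool" where
  "onset U \<longleftrightarrow> finite U \<and> (\<forall>u\<in>U. \<forall>w\<in>U. u \<bullet> w = (if u = w then 1 else 0))"

lemma spectral_sub:
  fixes A :: "real^'n^'n"
  assumes sym: "transpose A = A"
  shows "subspace V \<Longrightarrow> (\<And>v. v \<in> V \<Longrightarrow> A *v v \<in> V) \<Longrightarrow>
    \<exists>U. onset U \<and> U \<subseteq> V \<and> (\<forall>u\<in>U. A *v u = (u \<bullet> (A *v u)) *\<^sub>R u) \<and> V \<subseteq> span U"
proof (induction "dim V" arbitrary: V rule: less_induct)
  case less
  show ?case
  proof (cases "V = {0}")
    case True
    then show ?thesis by (intro exI[of _ "{}"]) (auto simp: onset_def)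
  next
    case False
    obtain u where uV: "u \<in> V" and nu: "norm u = 1" and eig: "A *v u = (u \<bullet> (A *v u)) *\<^sub>R u"
      using rayleigh_sub[OF sym less.prems(1) False less.prems(2)] by blast
    define V' where "V' = {w\<in>V. u \<bullet> w = 0}"
    have sV': "subspace V'"
      using less.prems(1) unfolding V'_def subspace_def
      by (auto simp: inner_add_right)
    have invV': "A *v v \<in> V'" if "v \<in> V'" for v
    proof -
      have "u \<bullet> (A *v v) = (A *v u) \<bullet> v" using inner_mv_sym[OF sym, of u v] by simp
      also have "\<dots> = (u \<bullet> (A *v u)) * (u \<bullet> v)" by (subst eig) simp
      also have "\<dots> = 0" using that by (simp add: V'_def)
      finally show ?thesis using that less.prems(2) by (simp add: V'_def)
    qed
    have uu: "u \<bullet> u = 1" using nu by (simp add: norm_eq_1)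
    have "u \<notin> V'" using uu by (simp add: V'_def)
    then have "V' \<subset> V" using uV unfolding V'_def by blast
    moreover have e1: "span V' = V'" using sV' by simp
    moreover have e2: "span V = V" using less.prems(1) by simp
    ultimately have "span V' \<subset> span V" unfolding e1 e2 by blast
    then have "dim V' < dim V" by (rule dim_psubset)
    then obtain U' where U': "onset U'" "U' \<subseteq> V'" "\<forall>u\<in>U'. A *v u = (u \<bullet> (A *v u)) *\<^sub>R u"
        "V' \<subseteq> span U'"
      using less.hyps[OF _ sV' invV'] by blast
    have unot: "u \<notin> U'" using U'(2) uu by (auto simp: V'_def)
    have orth: "\<forall>w\<in>U'. u \<bullet> w = 0 \<and> w \<bullet> u = 0" using U'(2) by (auto simp: V'_def inner_commute)
    show ?thesis
    proof (intro exI[of _ "insert u U'"] conjI)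
      show "onset (insert u U')"
        using U'(1) orth uu unot unfolding onset_def by auto
      show "insert u U' \<subseteq> V" using uV U'(2) by (auto simp: V'_def)
      show "\<forall>w\<in>insert u U'. A *v w = (w \<bullet> (A *v w)) *\<^sub>R w" using eig U'(3) by auto
      show "V \<subseteq> span (insert u U')"
      proof
        fix w assume w: "w \<in> V"
        have "w - (u \<bullet> w) *\<^sub>R u \<in> V'"
          using w uV less.prems(1) uu by (simp add: V'_def subspace_diff subspace_scale inner_diff_right)
        then have "w - (u \<bullet> w) *\<^sub>R u \<in> span (insert u U')"
          using U'(4) span_mono[of U' "insert u U'"] by blast
        moreover have "(u \<bullet> w) *\<^sub>R u \<in> span (insert u U')"
          by (simp add: span_base span_scale)
        ultimately have "(w - (u \<bullet> w) *\<^sub>R u) + (u \<bullet> w) *\<^sub>R u \<in> span (insert u U')"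
          by (rule span_add)
        then show "w \<in> span (insert u U')" by simp
      qed
    qed
  qed
qed

lemma spectral:
  fixes A :: "real^'n^'n"
  assumes sym: "transpose A = A"
  shows "\<exists>U. onset U \<and> (\<forall>u\<in>U. A *v u = (u \<bullet> (A *v u)) *\<^sub>R u) \<and> span U = UNIV"
  using spectral_sub[OF sym, of UNIV] by auto

lemma onset_inner_sum:
  assumes "onset U" "u \<in> U"
  shows "u \<bullet> (\<Sum>w\<in>U. c w *\<^sub>R w) = c u"
proof -
  have "u \<bullet> (\<Sum>w\<in>U. c w *\<^sub>R w) = (\<Sum>w\<in>U. c w * (u \<bullet> w))"
    by (simp add: inner_sum_right)
  also have "\<dots> = (\<Sum>w\<in>U. if w = u then c w else 0)"
    using assms unfolding onset_def by (intro sum.cong) auto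
  also have "\<dots> = c u" using assms unfolding onset_def by simp
  finally show ?thesis .
qed

lemma onset_expand:
  assumes "onset U" "span U = UNIV"
  shows "x = (\<Sum>u\<in>U. (u \<bullet> x) *\<^sub>R u)"
proof -
  define r where "r = x - (\<Sum>u\<in>U. (u \<bullet> x) *\<^sub>R u)"
  have "orthogonal r y" if "y \<in> U" for y
  proof -
    have "y \<bullet> (\<Sum>u\<in>U. (u \<bullet> x) *\<^sub>R u) = y \<bullet> x"
      using onset_inner_sum[OF assms(1) that, of "\<lambda>u. u \<bullet> x"] by (simp add: inner_commute)
    then have "y \<bullet> r = 0" by (simp add: r_def inner_diff_right)
    then show ?thesis by (simp add: orthogonal_def inner_commute)
  qed
  then have "orthogonal r r" using orthogonal_to_span[of r U r] assms(2) by auto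
  then have "r = 0" by (simp add: orthogonal_def)
  then show ?thesis by (simp add: r_def)
qed

definition outer :: "real^'n \<Rightarrow> real^'m \<Rightarrow> real^'m^'n" where
  "outer u v = (\<chi> i j. u$i * v$j)"

lemma outer_mv: "outer u v *v x = (v \<bullet> x) *\<^sub>R u"
  by (simp add: outer_def matrix_vector_mult_def vec_eq_iff inner_vec_def sum_distrib_left algebra_simps)

lemma transpose_outer: "transpose (outer u v) = outer v u"
  by (simp add: outer_def transpose_def vec_eq_iff)

lemma transpose_sum: "transpose (sum f S) = (\<Sum>x\<in>S. transpose (f x))"
  for f :: "'a \<Rightarrow> real^'n^'m"
  by (simp add: transpose_def vec_eq_iff)

lemma sum_mv: "(sum f S) *v x = (\<Sum>u\<in>S. f u *v x)"
  for f :: "'a \<Rightarrow> real^'n^'m"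
proof (cases "finite S")
  case True
  then show ?thesis by (induction S rule: finite_induct) (auto simp: matrix_vector_mult_add_rdistrib)
qed simp

lemma mv_sum: "A *v (sum f S) = (\<Sum>u\<in>S. A *v f u)"
  for A :: "real^'n^'m"
proof (cases "finite S")
  case True
  then show ?thesis by (induction S rule: finite_induct) (auto simp: matrix_vector_right_distrib)
qed simp

definition omat :: "(real^'n \<Rightarrow> real) \<Rightarrow> (real^'n) set \<Rightarrow> real^'n^'n" where
  "omat f U = (\<Sum>u\<in>U. f u *\<^sub>R outer u u)"

lemma omat_mv: "omat f U *v x = (\<Sum>u\<in>U. (f u * (u \<bullet> x)) *\<^sub>R u)"
proof -
  have "omat f U *v x = (\<Sum>u\<in>U. (f u *\<^sub>R outer u u) *v x)"
    unfolding omat_def by (rule sum_mv)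
  also have "\<dots> = (\<Sum>u\<in>U. (f u * (u \<bullet> x)) *\<^sub>R u)"
    by (simp add: scaleR_matrix_vector_assoc[symmetric] outer_mv)
  finally show ?thesis .
qed

lemma transpose_omat: "transpose (omat f U) = omat f U"
  by (simp add: omat_def transpose_sum transpose_scalar transpose_outer)

lemma omat_mult:
  assumes "onset U"
  shows "omat f U ** omat g U = omat (\<lambda>u. f u * g u) U"
proof -
  have "omat f U *v (omat g U *v x) = omat (\<lambda>u. f u * g u) U *v x" for x
  proof -
    have "omat f U *v (omat g U *v x) = (\<Sum>u\<in>U. (f u * (g u * (u \<bullet> x))) *\<^sub>R u)"
      unfolding omat_mv[of f] omat_mv[of g]
      using onset_inner_sum[OF assms, of _ "\<lambda>w. g w * (w \<bullet> x)"]
      by (intro sum.cong) auto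
    then show ?thesis by (simp add: omat_mv mult.assoc)
  qed
  then show ?thesis by (simp add: matrix_eq matrix_vector_mul_assoc)
qed

lemma omat_eigen:
  assumes "onset U" "span U = UNIV" "\<forall>u\<in>U. A *v u = (u \<bullet> (A *v u)) *\<^sub>R u"
  shows "A = omat (\<lambda>u. u \<bullet> (A *v u)) U"
proof -
  have "A *v x = omat (\<lambda>u. u \<bullet> (A *v u)) U *v x" for x
  proof -
    have "A *v x = A *v (\<Sum>u\<in>U. (u \<bullet> x) *\<^sub>R u)"
      by (rule arg_cong[OF onset_expand[OF assms(1,2)]])
    also have "\<dots> = (\<Sum>u\<in>U. (u \<bullet> x) *\<^sub>R (A *v u))"
      by (simp add: mv_sum matrix_vector_mult_scaleR)
    also have "\<dots> = omat (\<lambda>u. u \<bullet> (A *v u)) U *v x"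
      unfolding omat_mv
    proof (intro sum.cong refl)
      fix u assume "u \<in> U"
      then have "A *v u = (u \<bullet> (A *v u)) *\<^sub>R u" using assms(3) by blast
      then have "(u \<bullet> x) *\<^sub>R (A *v u) = (u \<bullet> x) *\<^sub>R ((u \<bullet> (A *v u)) *\<^sub>R u)"
        by (rule arg_cong[where f="\<lambda>v. (u \<bullet> x) *\<^sub>R v"])
      then show "(u \<bullet> x) *\<^sub>R (A *v u) = ((u \<bullet> (A *v u)) * (u \<bullet> x)) *\<^sub>R u"
        by (simp add: mult.commute)
    qed
    finally show ?thesis .
  qed
  then show ?thesis using matrix_eq by blast
qed

lemma omat_quad: "x \<bullet> (omat f U *v x) = (\<Sum>u\<in>U. f u * (u \<bullet> x)\<^sup>2)"
  by (simp add: omat_mv inner_sum_right power2_eq_square inner_commute mult.assoc)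

lemma psd_zero:
  fixes N :: "real^'n^'n"
  assumes sym: "transpose N = N" and psd: "\<And>w. 0 \<le> w \<bullet> (N *v w)" and z: "x \<bullet> (N *v x) = 0"
  shows "N *v x = 0"
proof -
  have "(N *v x) \<bullet> (N *v x) = 0"
    by (rule psd_zero_sub[OF sym subspace_UNIV]) (use psd z in auto)
  then show ?thesis by simp
qed

lemma psd_sqrt_ex:
  fixes W :: "real^'n^'n"
  assumes sym: "transpose W = W" and psd: "\<And>v. 0 \<le> v \<bullet> (W *v v)"
  shows "\<exists>B. B ** B = W \<and> transpose B = B \<and> (\<forall>v. 0 \<le> v \<bullet> (B *v v))"
proof -
  obtain U where U: "onset U" "\<forall>u\<in>U. W *v u = (u \<bullet> (W *v u)) *\<^sub>R u" "span U = UNIV"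
    using spectral[OF sym] by blast
  define B where "B = omat (\<lambda>u. sqrt (u \<bullet> (W *v u))) U"
  have "B ** B = omat (\<lambda>u. sqrt (u \<bullet> (W *v u)) * sqrt (u \<bullet> (W *v u))) U"
    unfolding B_def by (rule omat_mult[OF U(1)])
  also have "\<dots> = omat (\<lambda>u. u \<bullet> (W *v u)) U"
    using psd by (simp add: omat_def)
  also have "\<dots> = W" using omat_eigen[OF U(1,3,2)] by simp
  finally have 1: "B ** B = W" .
  have 2: "transpose B = B" by (simp add: B_def transpose_omat)
  have 3: "0 \<le> v \<bullet> (B *v v)" for v
    unfolding B_def omat_quad using psd by (intro sum_nonneg) auto
  show ?thesis using 1 2 3 by blast
qed

lemma psd_sqrt_unique:
  fixes B C :: "real^'n^'n"
  assumes sB: "transpose B = B" and pB: "\<And>v. 0 \<le> v \<bullet> (B *v v)"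
    and sC: "transpose C = C" and pC: "\<And>v. 0 \<le> v \<bullet> (C *v v)"
    and eq: "B ** B = C ** C"
  shows "B = C"
proof -
  define D where "D = B - C"
  have sD: "transpose D = D" using sB sC
    by (simp add: D_def transpose_def vec_eq_iff)
  have Dv: "D *v x = B *v x - C *v x" for x by (simp add: D_def matrix_vector_mult_diff_rdistrib)
  have eig0: "d = 0" if u: "u \<noteq> 0" and du: "D *v u = d *\<^sub>R u" for u d
  proof (rule ccontr)
    assume d: "d \<noteq> 0"
    have "u \<bullet> (B *v (D *v u)) + u \<bullet> (D *v (C *v u)) = u \<bullet> ((B ** B) *v u) - u \<bullet> ((C ** C) *v u)"
      by (simp add: Dv matrix_vector_mul_assoc[symmetric] matrix_vector_mult_diff_distrib inner_diff_right)
    also have "\<dots> = 0" using eq by simp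
    finally have 0: "u \<bullet> (B *v (D *v u)) + u \<bullet> (D *v (C *v u)) = 0" .
    have a: "u \<bullet> (B *v (D *v u)) = d * (u \<bullet> (B *v u))"
      by (simp add: du matrix_vector_mult_scaleR)
    have "u \<bullet> (D *v (C *v u)) = (D *v u) \<bullet> (C *v u)"
      using inner_mv_sym[OF sD, of u "C *v u"] by simp
    then have b: "u \<bullet> (D *v (C *v u)) = d * (u \<bullet> (C *v u))"
      by (simp add: du inner_commute)
    have "d * (u \<bullet> (B *v u) + u \<bullet> (C *v u)) = 0" using 0 a b by (simp add: algebra_simps)
    then have "u \<bullet> (B *v u) + u \<bullet> (C *v u) = 0" using d by simp
    then have "u \<bullet> (B *v u) = 0" "u \<bullet> (C *v u) = 0" using pB[of u] pC[of u] by linarith+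
    then have "B *v u = 0" "C *v u = 0" using psd_zero[OF sB pB] psd_zero[OF sC pC] by auto
    then have "d *\<^sub>R u = 0" using du Dv by simp
    then show False using d u by simp
  qed
  have le1: "x \<bullet> (D *v x) \<le> 0" for x
  proof -
    obtain u where "norm u = 1" "D *v u = (u \<bullet> (D *v u)) *\<^sub>R u"
      "\<forall>w\<in>UNIV. w \<bullet> (D *v w) \<le> (u \<bullet> (D *v u)) * (norm w)\<^sup>2"
      using rayleigh_sub[OF sD subspace_UNIV] by auto
    moreover have "u \<bullet> (D *v u) = 0" using eig0 calculation by (metis norm_zero zero_neq_one)
    ultimately show ?thesis by auto
  qed
  have sD': "transpose (- D) = - D" using sD by (simp add: transpose_def vec_eq_iff)
  have nD: "(- D) *v x = - (D *v x)" for x by (simp add: matrix_vector_mult_def vec_eq_iff sum_negf)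
  have le2: "0 \<le> x \<bullet> (D *v x)" for x
  proof -
    obtain u where "norm u = 1" "(- D) *v u = (u \<bullet> ((- D) *v u)) *\<^sub>R u"
      "\<forall>w\<in>UNIV. w \<bullet> ((- D) *v w) \<le> (u \<bullet> ((- D) *v u)) * (norm w)\<^sup>2"
      using rayleigh_sub[OF sD' subspace_UNIV] by auto
    moreover have "u \<bullet> ((- D) *v u) = 0"
    proof -
      have "D *v u = (- (u \<bullet> ((- D) *v u))) *\<^sub>R u" using calculation(2) nD
        by (metis minus_minus scaleR_minus_left)
      then have "- (u \<bullet> ((- D) *v u)) = 0" using eig0 calculation(1) by (metis norm_zero zero_neq_one)
      then show ?thesis by simp
    qed
    ultimately have "x \<bullet> ((- D) *v x) \<le> 0" by auto
    then show ?thesis by (simp add: nD)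
  qed
  have "D *v x = 0" for x using psd_zero[OF sD le2] le1[of x] le2[of x] by auto
  then have "D = 0" by (simp add: matrix_eq)
  then show ?thesis by (simp add: D_def)
qed

lemma msqrt_props:
  fixes W :: "real^'n^'n"
  assumes sym: "transpose W = W" and psd: "\<And>v. 0 \<le> v \<bullet> (W *v v)"
  shows "msqrt W ** msqrt W = W \<and> transpose (msqrt W) = msqrt W \<and> (\<forall>v. 0 \<le> v \<bullet> (msqrt W *v v))"
proof -
  have ex1: "\<exists>!B. B ** B = W \<and> transpose B = B \<and> (\<forall>v. 0 \<le> v \<bullet> (B *v v))"
  proof -
    obtain B where B: "B ** B = W \<and> transpose B = B \<and> (\<forall>v. 0 \<le> v \<bullet> (B *v v))"
      using psd_sqrt_ex[OF sym psd] by blast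
    show ?thesis
    proof (rule ex1I[of _ B])
      show "B ** B = W \<and> transpose B = B \<and> (\<forall>v. 0 \<le> v \<bullet> (B *v v))" by (rule B)
      fix C assume C: "C ** C = W \<and> transpose C = C \<and> (\<forall>v. 0 \<le> v \<bullet> (C *v v))"
      show "C = B" using psd_sqrt_unique[of C B] B C by auto
    qed
  qed
  show ?thesis unfolding msqrt_def by (rule theI'[OF ex1])
qed

definition penrose :: "real^'m^'n \<Rightarrow> real^'n^'m \<Rightarrow> bool" where
  "penrose A X \<longleftrightarrow> A ** X ** A = A \<and> X ** A ** X = X \<and>
                    transpose (A ** X) = A ** X \<and> transpose (X ** A) = X ** A"

lemma penrose_unique:
  assumes X: "penrose A X" and Y: "penrose A Y"
  shows "X = Y"
proof -
  have x1: "A ** X ** A = A" and x2: "X ** A ** X = X" and x3: "transpose (A ** X) = A ** X"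
    and x4: "transpose (X ** A) = X ** A" using X by (auto simp: penrose_def)
  have y1: "A ** Y ** A = A" and y2: "Y ** A ** Y = Y" and y3: "transpose (A ** Y) = A ** Y"
    and y4: "transpose (Y ** A) = Y ** A" using Y by (auto simp: penrose_def)
  have tA1: "transpose A = transpose A ** (A ** Y)"
  proof -
    have "transpose A = transpose (A ** Y ** A)" using y1 by simp
    also have "\<dots> = transpose A ** transpose (A ** Y)" by (simp add: matrix_transpose_mul)
    also have "\<dots> = transpose A ** (A ** Y)" using y3 by simp
    finally show ?thesis .
  qed
  have tA2: "transpose A = (X ** A) ** transpose A"
  proof -
    have "transpose A = transpose (A ** X ** A)" using x1 by simp
    also have "\<dots> = transpose (X ** A) ** transpose A" by (simp add: matrix_transpose_mul matrix_mul_assoc)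
    also have "\<dots> = (X ** A) ** transpose A" using x4 by simp
    finally show ?thesis .
  qed
  have "X = X ** (A ** X)" using x2 by (simp add: matrix_mul_assoc)
  also have "\<dots> = X ** transpose (A ** X)" using x3 by simp
  also have "\<dots> = X ** transpose X ** transpose A" by (simp add: matrix_transpose_mul matrix_mul_assoc)
  also have "\<dots> = X ** transpose X ** (transpose A ** (A ** Y))" using tA1 by simp
  also have "\<dots> = X ** (transpose X ** transpose A) ** (A ** Y)" by (simp add: matrix_mul_assoc)
  also have "\<dots> = X ** (A ** X) ** (A ** Y)" using x3 by (simp add: matrix_transpose_mul[symmetric])
  also have "\<dots> = (X ** A ** X) ** A ** Y" by (simp add: matrix_mul_assoc)
  also have "\<dots> = X ** A ** Y" using x2 by simp
  finally have 1: "X = X ** A ** Y" .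
  have "Y = (Y ** A) ** Y" using y2 by (simp add: matrix_mul_assoc)
  also have "\<dots> = transpose (Y ** A) ** Y" using y4 by simp
  also have "\<dots> = transpose A ** transpose Y ** Y" by (simp add: matrix_transpose_mul)
  also have "\<dots> = ((X ** A) ** transpose A) ** transpose Y ** Y" using tA2 by simp
  also have "\<dots> = (X ** A) ** (transpose A ** transpose Y) ** Y" by (simp add: matrix_mul_assoc)
  also have "\<dots> = (X ** A) ** (Y ** A) ** Y" using y4 by (simp add: matrix_transpose_mul[symmetric])
  also have "\<dots> = X ** A ** (Y ** A ** Y)" by (simp add: matrix_mul_assoc)
  also have "\<dots> = X ** A ** Y" using y2 by simp
  finally have 2: "Y = X ** A ** Y" .
  show ?thesis using 1 2 by simp
qed

lemma pinv_sym:
  fixes M :: "real^'t^'t"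
  assumes sym: "transpose M = M"
  shows "penrose M (pinv M) \<and> transpose (pinv M) = pinv M"
proof -
  obtain U where U: "onset U" "\<forall>u\<in>U. M *v u = (u \<bullet> (M *v u)) *\<^sub>R u" "span U = UNIV"
    using spectral[OF sym] by blast
  define l where "l u = u \<bullet> (M *v u)" for u
  define X where "X = omat (\<lambda>u. if l u = 0 then 0 else 1 / l u) U"
  have M: "M = omat l U" using omat_eigen[OF U(1,3,2)] by (simp add: l_def[abs_def])
  have MX: "M ** X = omat (\<lambda>u. if l u = 0 then 0 else 1) U"
    unfolding M X_def omat_mult[OF U(1)] by (rule arg_cong[where f="\<lambda>f. omat f U"]) auto
  have XM: "X ** M = omat (\<lambda>u. if l u = 0 then 0 else 1) U"
    unfolding M X_def omat_mult[OF U(1)] by (rule arg_cong[where f="\<lambda>f. omat f U"]) auto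
  have MXM: "M ** X ** M = M"
  proof -
    have e: "omat (\<lambda>u. if l u = 0 then 0 else 1) U ** omat l U = omat l U"
      unfolding omat_mult[OF U(1)] by (rule arg_cong[where f="\<lambda>f. omat f U"]) auto
    have "M ** X ** M = omat (\<lambda>u. if l u = 0 then 0 else 1) U ** M" using MX by simp
    also have "\<dots> = M" using e M by simp
    finally show ?thesis .
  qed
  have XMX: "X ** M ** X = X"
  proof -
    have e: "omat (\<lambda>u. if l u = 0 then 0 else 1) U ** X = X"
      unfolding X_def omat_mult[OF U(1)] by (rule arg_cong[where f="\<lambda>f. omat f U"]) auto
    have "X ** M ** X = omat (\<lambda>u. if l u = 0 then 0 else 1) U ** X" using XM by simp
    also have "\<dots> = X" using e by simp
    finally show ?thesis .
  qed
  have P: "penrose M X"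
    unfolding penrose_def using MXM XMX MX XM by (simp add: transpose_omat)
  have "pinv M = X"
    unfolding pinv_def
  proof (rule the_equality)
    show "M ** X ** M = M \<and> X ** M ** X = X \<and> transpose (M ** X) = M ** X \<and> transpose (X ** M) = X ** M"
      using P by (simp add: penrose_def)
    fix Y assume "M ** Y ** M = M \<and> Y ** M ** Y = Y \<and> transpose (M ** Y) = M ** Y \<and> transpose (Y ** M) = Y ** M"
    then have "penrose M Y" by (simp add: penrose_def)
    then show "Y = X" using penrose_unique P by blast
  qed
  then show ?thesis using P by (simp add: X_def transpose_omat)
qed

lemma eig_indep:
  fixes A :: "real^'n^'n"
  assumes "finite L" "\<forall>l\<in>L. v l \<noteq> 0 \<and> A *v v l = l *\<^sub>R v l"
  shows "independent (v ` L) \<and> inj_on v L"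
  using assms
proof (induction L rule: finite_induct)
  case empty then show ?case by (simp add: independent_empty)
next
  case (insert m L)
  then have IH: "independent (v ` L)" "inj_on v L" and vm: "v m \<noteq> 0" "A *v v m = m *\<^sub>R v m"
    and vL: "\<forall>l\<in>L. v l \<noteq> 0 \<and> A *v v l = l *\<^sub>R v l" by auto
  have notin: "v m \<notin> span (v ` L)"
  proof
    assume "v m \<in> span (v ` L)"
    then obtain c where c: "v m = (\<Sum>w\<in>v`L. c w *\<^sub>R w)"
      using span_finite[of "v ` L"] insert.hyps(1) by auto
    have c': "v m = (\<Sum>l\<in>L. c (v l) *\<^sub>R v l)"
      using c sum.reindex[OF IH(2), of "\<lambda>w. c w *\<^sub>R w"] by simp
    have "A *v v m - m *\<^sub>R v m = (\<Sum>l\<in>L. c (v l) *\<^sub>R (A *v v l)) - (\<Sum>l\<in>L. (m * c (v l)) *\<^sub>R v l)"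
      by (subst (1 2) c') (simp add: mv_sum matrix_vector_mult_scaleR scaleR_sum_right)
    also have "\<dots> = (\<Sum>l\<in>L. c (v l) *\<^sub>R (A *v v l) - (m * c (v l)) *\<^sub>R v l)"
      by (simp only: sum_subtractf)
    also have "\<dots> = (\<Sum>l\<in>L. (c (v l) * (l - m)) *\<^sub>R v l)"
    proof (rule sum.cong[OF refl])
      fix l assume "l \<in> L"
      then have "A *v v l = l *\<^sub>R v l" using vL by blast
      then show "c (v l) *\<^sub>R (A *v v l) - (m * c (v l)) *\<^sub>R v l = (c (v l) * (l - m)) *\<^sub>R v l"
        by (simp add: algebra_simps)
    qed
    finally have z: "(\<Sum>l\<in>L. (c (v l) * (l - m)) *\<^sub>R v l) = 0" using vm by simp
    define u where "u w = c w * (inv_into L v w - m)" for w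
    have "(\<Sum>w\<in>v`L. u w *\<^sub>R w) = (\<Sum>l\<in>L. u (v l) *\<^sub>R v l)"
      by (rule sum.reindex[OF IH(2), unfolded comp_def])
    also have "\<dots> = (\<Sum>l\<in>L. (c (v l) * (l - m)) *\<^sub>R v l)"
      using IH(2) by (intro sum.cong refl) (simp add: u_def)
    finally have "(\<Sum>w\<in>v`L. u w *\<^sub>R w) = 0" using z by simp
    moreover have "finite (v ` L)" using insert.hyps(1) by simp
    ultimately have u0: "\<forall>w\<in>v`L. u w = 0"
      using IH(1) dependent_finite[of "v ` L"] by blast
    have "c (v l) = 0" if "l \<in> L" for l
    proof -
      have "u (v l) = 0" using u0 that by auto
      then have "c (v l) * (l - m) = 0" using IH(2) that by (simp add: u_def)
      moreover have "l \<noteq> m" using that insert.hyps(2) by auto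
      ultimately show ?thesis by simp
    qed
    then have "v m = 0" using c' by simp
    then show False using vm by simp
  qed
  have "independent (insert (v m) (v ` L))" by (rule independent_insertI[OF notin IH(1)])
  moreover have "v m \<notin> v ` L" using notin span_base[of "v m" "v ` L"] by blast
  ultimately show ?case using IH(2) by (simp add: image_insert inj_on_insert) blast
qed

lemma finite_eigs: "finite (real_eigenvalues (A::real^'n^'n))"
proof (rule ccontr)
  assume "infinite (real_eigenvalues A)"
  then obtain L where L: "finite L" "card L = Suc CARD('n)" "L \<subseteq> real_eigenvalues A"
    using infinite_arbitrarily_large by blast
  define v where "v l = (SOME v. v \<noteq> 0 \<and> A *v v = l *\<^sub>R v)" for l
  have "\<forall>l\<in>L. v l \<noteq> 0 \<and> A *v v l = l *\<^sub>R v l"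
  proof
    fix l assume "l \<in> L"
    then have "\<exists>v. v \<noteq> 0 \<and> A *v v = l *\<^sub>R v" using L(3) unfolding real_eigenvalues_def by auto
    then show "v l \<noteq> 0 \<and> A *v v l = l *\<^sub>R v l" unfolding v_def by (rule someI_ex)
  qed
  then have "independent (v ` L) \<and> inj_on v L" using eig_indep L(1) by blast
  then have "card (v ` L) \<le> DIM(real^'n)" and "card (v ` L) = card L"
    using independent_bound card_image by blast+
  then show False using L(2) by simp
qed

lemma neg_mv: "(- A) *v x = - (A *v x)" for A :: "real^'n^'m"
  by (simp add: matrix_vector_mult_def vec_eq_iff sum_negf)

lemma lmax_sym:
  fixes A :: "real^'n^'n"
  assumes sym: "transpose A = A"
  shows "(\<forall>x. x \<bullet> (A *v x) \<le> lambda_max A * (norm x)\<^sup>2) \<and> (\<exists>u. norm u = 1 \<and> A *v u = lambda_max A *\<^sub>R u)"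
proof -
  obtain u where u: "norm u = 1" "A *v u = (u \<bullet> (A *v u)) *\<^sub>R u"
    "\<forall>w\<in>UNIV. w \<bullet> (A *v w) \<le> (u \<bullet> (A *v u)) * (norm w)\<^sup>2"
    using rayleigh_sub[OF sym subspace_UNIV] by auto
  define c where "c = u \<bullet> (A *v u)"
  have cin: "c \<in> real_eigenvalues A" unfolding real_eigenvalues_def
    using u(1,2) c_def by (intro CollectI exI[of _ u]) auto
  have le: "l \<le> c" if lin: "l \<in> real_eigenvalues A" for l
  proof -
    obtain v where v: "v \<noteq> 0" "A *v v = l *\<^sub>R v" using lin by (auto simp: real_eigenvalues_def)
    have "v \<bullet> (A *v v) = l * (norm v)\<^sup>2" by (simp add: v(2) power2_norm_eq_inner)
    moreover have "v \<bullet> (A *v v) \<le> c * (norm v)\<^sup>2" using u(3) c_def by auto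
    ultimately have "l * (norm v)\<^sup>2 \<le> c * (norm v)\<^sup>2" by simp
    moreover have "0 < (norm v)\<^sup>2" using v(1) by simp
    ultimately show ?thesis by (rule mult_right_le_imp_le)
  qed
  have "lambda_max A = c" unfolding lambda_max_def by (rule Max_eqI[OF finite_eigs le cin])
  then show ?thesis using u c_def by auto
qed

lemma lmin_sym:
  fixes A :: "real^'n^'n"
  assumes sym: "transpose A = A"
  shows "\<forall>x. lambda_min A * (norm x)\<^sup>2 \<le> x \<bullet> (A *v x)"
proof -
  have sym': "transpose (- A) = - A" using sym by (simp add: transpose_def vec_eq_iff)
  obtain u where u: "norm u = 1" "(- A) *v u = (u \<bullet> ((- A) *v u)) *\<^sub>R u"
    "\<forall>w\<in>UNIV. w \<bullet> ((- A) *v w) \<le> (u \<bullet> ((- A) *v u)) * (norm w)\<^sup>2"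
    using rayleigh_sub[OF sym' subspace_UNIV] by auto
  define c where "c = u \<bullet> ((- A) *v u)"
  have Au: "A *v u = (- c) *\<^sub>R u" using u(2) c_def neg_mv[of A u]
    by (metis minus_minus scaleR_minus_left)
  have cin: "- c \<in> real_eigenvalues A" unfolding real_eigenvalues_def
    using u(1) Au by (intro CollectI exI[of _ u]) auto
  have bnd: "- c * (norm w)\<^sup>2 \<le> w \<bullet> (A *v w)" for w
    using u(3) c_def by (auto simp: neg_mv)
  have le: "- c \<le> l" if lin: "l \<in> real_eigenvalues A" for l
  proof -
    obtain v where v: "v \<noteq> 0" "A *v v = l *\<^sub>R v" using lin by (auto simp: real_eigenvalues_def)
    have "v \<bullet> (A *v v) = l * (norm v)\<^sup>2" by (simp add: v(2) power2_norm_eq_inner)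
    then have "- c * (norm v)\<^sup>2 \<le> l * (norm v)\<^sup>2" using bnd by metis
    moreover have "0 < (norm v)\<^sup>2" using v(1) by simp
    ultimately show ?thesis by (rule mult_right_le_imp_le)
  qed
  have "lambda_min A = - c" unfolding lambda_min_def by (rule Min_eqI[OF finite_eigs le cin])
  then show ?thesis using bnd by auto
qed

lemma matrix_inv_props:
  fixes W :: "real^'n^'n"
  assumes "invertible W"
  shows "W ** matrix_inv W = mat 1 \<and> matrix_inv W ** W = mat 1"
  using assms unfolding invertible_def matrix_inv_def by (rule someI_ex)

lemma pd_facts:
  fixes W :: "real^'n^'n"
  assumes pd: "pos_def_mat W"
  shows "invertible W" "W ** matrix_inv W = mat 1" "matrix_inv W ** W = mat 1"
    "transpose (matrix_inv W) = matrix_inv W" "transpose W = W" "\<And>v. 0 \<le> v \<bullet> (W *v v)"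
    "\<And>v. 0 \<le> v \<bullet> (matrix_inv W *v v)"
proof -
  show sym: "transpose W = W" using pd by (simp add: pos_def_mat_def)
  have pos: "v \<noteq> 0 \<Longrightarrow> 0 < v \<bullet> (W *v v)" for v using pd by (simp add: pos_def_mat_def)
  show psd: "0 \<le> v \<bullet> (W *v v)" for v using pos[of v] by (cases "v = 0") auto
  have "inj ((*v) W)"
  proof (rule injI)
    fix x y assume "W *v x = W *v y"
    then have "W *v (x - y) = 0" by (simp add: matrix_vector_mult_diff_distrib)
    then have "(x - y) \<bullet> (W *v (x - y)) = 0" by simp
    then show "x = y" using pos[of "x - y"] by (cases "x - y = 0") auto
  qed
  then obtain B where "B ** W = mat 1" using matrix_left_invertible_injective by blast
  then have "W ** B = mat 1" "B ** W = mat 1" using matrix_left_right_inverse by blast+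
  then show inv: "invertible W" unfolding invertible_def by blast
  show 1: "W ** matrix_inv W = mat 1" and 2: "matrix_inv W ** W = mat 1"
    using matrix_inv_props[OF inv] by auto
  have "transpose (matrix_inv W) ** W = mat 1"
    using arg_cong[OF 1, of transpose] sym by (simp add: matrix_transpose_mul)
  then have "transpose (matrix_inv W) = transpose (matrix_inv W) ** (W ** matrix_inv W)" using 1 by simp
  also have "\<dots> = matrix_inv W"
    using \<open>transpose (matrix_inv W) ** W = mat 1\<close> by (simp add: matrix_mul_assoc)
  finally show symi: "transpose (matrix_inv W) = matrix_inv W" .
  show "0 \<le> v \<bullet> (matrix_inv W *v v)" for v
  proof -
    have "v = W *v (matrix_inv W *v v)" using 1 by (simp add: matrix_vector_mul_assoc)
    then have "v \<bullet> (matrix_inv W *v v) = (W *v (matrix_inv W *v v)) \<bullet> (matrix_inv W *v v)" by simp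
    also have "\<dots> = (matrix_inv W *v v) \<bullet> (W *v (matrix_inv W *v v))" by (simp add: inner_commute)
    finally show ?thesis using psd by simp
  qed
qed

lemma sqrt_facts:
  fixes W :: "real^'n^'n"
  assumes pd: "pos_def_mat W"
  shows "msqrt W ** msqrt W = W" "transpose (msqrt W) = msqrt W"
    "msqrt W ** (msqrt W ** matrix_inv W) = mat 1" "(msqrt W ** matrix_inv W) ** msqrt W = mat 1"
    "transpose (msqrt W ** matrix_inv W) = msqrt W ** matrix_inv W"
    "(msqrt W ** matrix_inv W) ** (msqrt W ** matrix_inv W) = matrix_inv W"
proof -
  define B where "B = msqrt W"
  define Wi where "Wi = matrix_inv W"
  have BB: "B ** B = W" and sB: "transpose B = B"
    using msqrt_props[OF pd_facts(5,6)[OF pd]] by (auto simp: B_def)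
  have WWi: "W ** Wi = mat 1" and WiW: "Wi ** W = mat 1" and sWi: "transpose Wi = Wi"
    using pd_facts[OF pd] by (auto simp: Wi_def)
  have 3: "B ** (B ** Wi) = mat 1" using BB WWi by (simp add: matrix_mul_assoc)
  then have 4: "(B ** Wi) ** B = mat 1" using matrix_left_right_inverse by blast
  have BW: "B ** W = W ** B" using BB by (metis matrix_mul_assoc)
  have WiB: "Wi ** B = B ** Wi"
  proof -
    have "Wi ** B = Wi ** B ** (W ** Wi)" using WWi by simp
    also have "\<dots> = Wi ** (B ** W) ** Wi" by (simp add: matrix_mul_assoc)
    also have "\<dots> = Wi ** (W ** B) ** Wi" using BW by simp
    also have "\<dots> = (Wi ** W) ** B ** Wi" by (simp add: matrix_mul_assoc)
    also have "\<dots> = B ** Wi" using WiW by simp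
    finally show ?thesis .
  qed
  have 5: "transpose (B ** Wi) = B ** Wi" using WiB sB sWi by (simp add: matrix_transpose_mul)
  have "(B ** Wi) ** (B ** Wi) = B ** (Wi ** B) ** Wi" by (simp add: matrix_mul_assoc)
  also have "\<dots> = (B ** B) ** (Wi ** Wi)" using WiB by (simp add: matrix_mul_assoc)
  also have "\<dots> = (W ** Wi) ** Wi" using BB by (simp add: matrix_mul_assoc)
  also have "\<dots> = Wi" using WWi by simp
  finally have 6: "(B ** Wi) ** (B ** Wi) = Wi" .
  show "msqrt W ** msqrt W = W" "transpose (msqrt W) = msqrt W"
    "msqrt W ** (msqrt W ** matrix_inv W) = mat 1" "(msqrt W ** matrix_inv W) ** msqrt W = mat 1"
    "transpose (msqrt W ** matrix_inv W) = msqrt W ** matrix_inv W"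
    "(msqrt W ** matrix_inv W) ** (msqrt W ** matrix_inv W) = matrix_inv W"
    using BB sB 3 4 5 6 by (simp_all add: B_def Wi_def)
qed

lemma sym_BMB:
  assumes "transpose B = B" "transpose M = M"
  shows "transpose (B ** M ** B) = B ** M ** (B::real^'n^'n)"
  using assms by (simp add: matrix_transpose_mul matrix_mul_assoc)

lemma rho_bound:
  fixes W M :: "real^'n^'n"
  assumes pd: "pos_def_mat W" and sM: "transpose M = M"
  shows "y \<bullet> (M *v y) \<le> lambda_max (msqrt W ** M ** msqrt W) * (y \<bullet> (matrix_inv W *v y))"
proof -
  define B where "B = msqrt W"
  define Bi where "Bi = msqrt W ** matrix_inv W"
  note sf = sqrt_facts[OF pd, folded B_def Bi_def]
  define z where "z = Bi *v y"
  have yz: "y = B *v z" using sf(3) by (simp add: z_def matrix_vector_mul_assoc)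
  have "y \<bullet> (M *v y) = z \<bullet> ((B ** M ** B) *v z)"
    unfolding yz using inner_mv_sym[OF sf(2), of z "M *v (B *v z)"]
    by (simp add: matrix_vector_mul_assoc matrix_mul_assoc)
  also have "\<dots> \<le> lambda_max (B ** M ** B) * (norm z)\<^sup>2"
    using lmax_sym[OF sym_BMB[OF sf(2) sM]] by blast
  also have "(norm z)\<^sup>2 = y \<bullet> (matrix_inv W *v y)"
  proof -
    have "(norm z)\<^sup>2 = (Bi *v y) \<bullet> (Bi *v y)" by (simp add: z_def power2_norm_eq_inner)
    also have "\<dots> = y \<bullet> (Bi *v (Bi *v y))" using inner_mv_sym[OF sf(5)] by simp
    also have "\<dots> = y \<bullet> (matrix_inv W *v y)" using sf(6) by (simp add: matrix_vector_mul_assoc)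
    finally show ?thesis .
  qed
  finally show ?thesis by (simp add: B_def)
qed

lemma rho_nonneg:
  fixes W M :: "real^'n^'n"
  assumes pd: "pos_def_mat W" and sM: "transpose M = M" and pM: "\<And>v. 0 \<le> v \<bullet> (M *v v)"
  shows "0 \<le> lambda_max (msqrt W ** M ** msqrt W)"
proof -
  define B where "B = msqrt W"
  note sf = sqrt_facts[OF pd, folded B_def]
  obtain u where u: "norm u = 1" "(B ** M ** B) *v u = lambda_max (B ** M ** B) *\<^sub>R u"
    using lmax_sym[OF sym_BMB[OF sf(2) sM]] by blast
  have "u \<bullet> ((B ** M ** B) *v u) = lambda_max (B ** M ** B)"
    using u by (simp add: power2_norm_eq_inner[symmetric])
  moreover have "u \<bullet> ((B ** M ** B) *v u) = (B *v u) \<bullet> (M *v (B *v u))"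
    using inner_mv_sym[OF sf(2), of u "M *v (B *v u)"] by (simp add: matrix_vector_mul_assoc matrix_mul_assoc)
  ultimately show ?thesis using pM by (simp add: B_def)
qed

lemma kappa_bound:
  fixes W K :: "real^'n^'n"
  assumes pd: "pos_def_mat W" and sK: "transpose K = K"
  shows "lambda_min (K ** W) * (y \<bullet> (matrix_inv W *v y)) \<le> y \<bullet> (K *v y)"
proof -
  define B where "B = msqrt W"
  define Bi where "Bi = msqrt W ** matrix_inv W"
  note sf = sqrt_facts[OF pd, folded B_def Bi_def]
  have eigs: "real_eigenvalues (K ** W) = real_eigenvalues (B ** K ** B)"
  proof (intro set_eqI iffI)
    fix l assume "l \<in> real_eigenvalues (K ** W)"
    then obtain v where v: "v \<noteq> 0" "(K ** W) *v v = l *\<^sub>R v" by (auto simp: real_eigenvalues_def)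
    have "B *v v \<noteq> 0"
    proof
      assume "B *v v = 0"
      then have "Bi *v (B *v v) = 0" by simp
      then show False using sf(4) v(1) by (simp add: matrix_vector_mul_assoc)
    qed
    moreover have "(B ** K ** B) *v (B *v v) = l *\<^sub>R (B *v v)"
    proof -
      have "(B ** K ** B) *v (B *v v) = B *v ((K ** (B ** B)) *v v)" by (simp add: matrix_vector_mul_assoc matrix_mul_assoc)
      also have "\<dots> = l *\<^sub>R (B *v v)" using v(2) sf(1) by (simp add: matrix_vector_mult_scaleR)
      finally show ?thesis .
    qed
    ultimately show "l \<in> real_eigenvalues (B ** K ** B)" by (auto simp: real_eigenvalues_def)
  next
    fix l assume "l \<in> real_eigenvalues (B ** K ** B)"
    then obtain w where w: "w \<noteq> 0" "(B ** K ** B) *v w = l *\<^sub>R w" by (auto simp: real_eigenvalues_def)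
    have "Bi *v w \<noteq> 0"
    proof
      assume "Bi *v w = 0"
      then have "B *v (Bi *v w) = 0" by simp
      then show False using sf(3) w(1) by (simp add: matrix_vector_mul_assoc)
    qed
    moreover have "(K ** W) *v (Bi *v w) = l *\<^sub>R (Bi *v w)"
    proof -
      have "(K ** W) *v (Bi *v w) = (K ** B) *v ((B ** Bi) *v w)"
        by (simp add: matrix_vector_mul_assoc matrix_mul_assoc sf(1)[symmetric])
      also have "\<dots> = (Bi ** B) *v ((K ** B) *v w)" using sf(3,4) by simp
      also have "\<dots> = Bi *v ((B ** K ** B) *v w)" by (simp add: matrix_vector_mul_assoc matrix_mul_assoc)
      also have "\<dots> = l *\<^sub>R (Bi *v w)" using w(2) by (simp add: matrix_vector_mult_scaleR)
      finally show ?thesis .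
    qed
    ultimately show "l \<in> real_eigenvalues (K ** W)" by (auto simp: real_eigenvalues_def)
  qed
  define z where "z = Bi *v y"
  have yz: "y = B *v z" using sf(3) by (simp add: z_def matrix_vector_mul_assoc)
  have "(norm z)\<^sup>2 = y \<bullet> (matrix_inv W *v y)"
  proof -
    have "(norm z)\<^sup>2 = (Bi *v y) \<bullet> (Bi *v y)" by (simp add: z_def power2_norm_eq_inner)
    also have "\<dots> = y \<bullet> (Bi *v (Bi *v y))" using inner_mv_sym[OF sf(5)] by simp
    also have "\<dots> = y \<bullet> (matrix_inv W *v y)" using sf(6) by (simp add: matrix_vector_mul_assoc)
    finally show ?thesis .
  qed
  then have "lambda_min (K ** W) * (y \<bullet> (matrix_inv W *v y)) = lambda_min (B ** K ** B) * (norm z)\<^sup>2"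
    by (simp add: lambda_min_def eigs)
  also have "\<dots> \<le> z \<bullet> ((B ** K ** B) *v z)"
    using lmin_sym[OF sym_BMB[OF sf(2) sK]] by blast
  also have "\<dots> = y \<bullet> (K *v y)"
    unfolding yz using inner_mv_sym[OF sf(2), of z "K *v (B *v z)"]
    by (simp add: matrix_vector_mul_assoc matrix_mul_assoc)
  finally show ?thesis .
qed

lemma trace_rows: "trace (X ** M ** transpose X) = (\<Sum>r\<in>UNIV. (X$r) \<bullet> (M *v (X$r)))"
  for X :: "real^'n^'d" and M :: "real^'n^'n"
  apply (simp add: trace_def matrix_matrix_mult_def transpose_def matrix_vector_mult_def inner_vec_def
      sum_distrib_left sum_distrib_right mult.assoc mult.left_commute)
  apply (rule sum.cong[OF refl])
  apply (rule sum.swap)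
  done

lemma wnorm_sq:
  fixes W :: "real^'n^'n" and X :: "real^'n^'d"
  assumes pd: "pos_def_mat W"
  shows "(wnorm W X)\<^sup>2 = (\<Sum>r\<in>UNIV. (X$r) \<bullet> (matrix_inv W *v (X$r)))"
proof -
  have "0 \<le> (\<Sum>r\<in>UNIV. (X$r) \<bullet> (matrix_inv W *v (X$r)))"
    using pd_facts(7)[OF pd] by (intro sum_nonneg) auto
  then show ?thesis by (simp add: wnorm_def trace_rows)
qed

lemma row_mult: "(X ** P) $ r = transpose P *v (X $ r)"
  for X :: "real^'n^'d" and P :: "real^'m^'n"
  by (simp add: matrix_matrix_mult_def transpose_def matrix_vector_mult_def vec_eq_iff mult.commute)

lemma PiS_facts:
  fixes W :: "real^'n^'n" and S :: "real^'t^'n"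
  assumes pd: "pos_def_mat W"
  defines "H \<equiv> S ** pinv (transpose S ** W ** S) ** transpose S"
  shows "transpose H = H" "PiS W S ** matrix_inv W = H" "matrix_inv W ** transpose (PiS W S) = H"
    "PiS W S ** matrix_inv W ** transpose (PiS W S) = H"
proof -
  define M where "M = transpose S ** W ** S"
  define X where "X = pinv M"
  have sW: "transpose W = W" and WWi: "W ** matrix_inv W = mat 1" and sWi: "transpose (matrix_inv W) = matrix_inv W"
    using pd_facts[OF pd] by auto
  have sM: "transpose M = M" using sW by (simp add: M_def matrix_transpose_mul matrix_mul_assoc)
  have pen: "penrose M X" and sX: "transpose X = X" using pinv_sym[OF sM] by (auto simp: X_def)
  have H: "H = S ** X ** transpose S" by (simp add: H_def X_def M_def)
  have P: "PiS W S = S ** X ** transpose S ** W" by (simp add: PiS_def X_def M_def)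
  show 1: "transpose H = H" using sX by (simp add: H matrix_transpose_mul matrix_mul_assoc)
  have 2: "PiS W S ** matrix_inv W = H" unfolding P H
    using WWi by (simp add: matrix_mul_assoc[symmetric])
  show "PiS W S ** matrix_inv W = H" by (rule 2)
  have 3: "matrix_inv W ** transpose (PiS W S) = H"
  proof -
    have "matrix_inv W ** transpose (PiS W S) = transpose (PiS W S ** matrix_inv W)"
      using sWi by (simp add: matrix_transpose_mul)
    then show ?thesis using 1 2 by simp
  qed
  show "matrix_inv W ** transpose (PiS W S) = H" by (rule 3)
  have "PiS W S ** matrix_inv W ** transpose (PiS W S) = PiS W S ** (matrix_inv W ** transpose (PiS W S))"
    by (simp add: matrix_mul_assoc)
  also have "\<dots> = S ** X ** transpose S ** W ** H" using 3 P by simp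
  also have "\<dots> = S ** (X ** M ** X) ** transpose S"
    by (simp add: H M_def matrix_mul_assoc)
  also have "\<dots> = H" using pen by (simp add: penrose_def H)
  finally show "PiS W S ** matrix_inv W ** transpose (PiS W S) = H" .
qed

lemma outer_mult_left: "A ** outer u w = outer (A *v u) w"
  for A :: "real^'n^'m" and u :: "real^'n" and w :: "real^'k"
  by (simp add: outer_def matrix_matrix_mult_def matrix_vector_mult_def vec_eq_iff sum_distrib_right mult.assoc)

lemma outer_mult_right: "outer u w ** transpose B = outer u (B *v w)"
  for B :: "real^'n^'m" and u :: "real^'k" and w :: "real^'n"
  by (simp add: outer_def matrix_matrix_mult_def matrix_vector_mult_def transpose_def vec_eq_iff
      sum_distrib_left mult.assoc mult.left_commute mult.commute)

lemma ones_mat_outer: "(ones_mat :: real^'n^'n) = outer ones ones"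
  by (simp add: ones_mat_def outer_def ones_def)

lemma outer_scale: "c *\<^sub>R outer u w = outer (c *\<^sub>R u) w"
  by (simp add: outer_def vec_eq_iff)

lemma outer_scale2: "outer u (c *\<^sub>R w) = outer (c *\<^sub>R u) w"
  by (simp add: outer_def vec_eq_iff mult.assoc mult.left_commute)

lemma quad_outer: "m \<bullet> (outer v v *v m) = (v \<bullet> m)\<^sup>2"
  by (simp add: outer_mv power2_eq_square inner_commute)

lemma norm_sq_rows: "(norm (M *v v))\<^sup>2 = (\<Sum>r\<in>UNIV. ((M$r) \<bullet> v)\<^sup>2)"
  for M :: "real^'n^'d"
  unfolding power2_norm_eq_inner by (simp add: inner_vec_def matrix_vector_mul_component power2_eq_square)

lemma matrix_add_rdistrib': "(A + B) ** C = A ** C + B ** (C::real^'k^'n)"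
  for A B :: "real^'n^'m"
  by (simp add: matrix_matrix_mult_def vec_eq_iff algebra_simps sum.distrib)

lemma linear_transpose: "bounded_linear (transpose :: real^'n^'m \<Rightarrow> real^'m^'n)"
proof -
  have "linear (transpose :: real^'n^'m \<Rightarrow> real^'m^'n)"
    by (rule linearI) (simp_all add: transpose_def vec_eq_iff)
  then show ?thesis by (simp add: linear_conv_bounded_linear)
qed

lemma bl_quad: "bounded_linear (\<lambda>Q::real^'n^'n. m \<bullet> ((Q ** C) *v m'))"
proof -
  have "linear (\<lambda>Q::real^'n^'n. m \<bullet> ((Q ** C) *v m'))"
    by (rule linearI) (simp_all add: matrix_add_rdistrib' matrix_vector_mult_add_rdistrib inner_add_right
        scalar_matrix_assoc[symmetric] scaleR_matrix_vector_assoc[symmetric])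
  then show ?thesis by (simp add: linear_conv_bounded_linear)
qed

locale js =
  fixes W :: "real^'n::finite^'n" and D :: "(real^'t::finite^'n) measure" and \<theta> :: "real^'t^'n \<Rightarrow> real"
  assumes pd: "pos_def_mat W" and D_prob: "prob_space D"
    and int_v: "integrable D (\<lambda>S. \<theta> S *\<^sub>R (PiS W S *v ones))"
    and unb: "integral\<^sup>L D (\<lambda>S. \<theta> S *\<^sub>R (PiS W S *v ones)) = ones"
    and int_P: "integrable D (\<lambda>S. PiS W S)"
    and int_Q: "integrable D (\<lambda>S. (\<theta> S)\<^sup>2 *\<^sub>R (PiS W S ** ones_mat ** transpose (PiS W S)))"
begin

abbreviation "vv S \<equiv> \<theta> S *\<^sub>R (PiS W S *v ones)"
abbreviation "QQ S \<equiv> (\<theta> S)\<^sup>2 *\<^sub>R (PiS W S ** ones_mat ** transpose (PiS W S))"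
abbreviation "Wi \<equiv> matrix_inv W"
abbreviation "Pb \<equiv> integral\<^sup>L D (\<lambda>S. PiS W S)"
abbreviation "Qb \<equiv> integral\<^sup>L D QQ"
abbreviation "Kb \<equiv> Pb ** Wi"

lemma QQ_outer: "QQ S = outer (vv S) (vv S)"
proof -
  have "PiS W S ** ones_mat ** transpose (PiS W S) = outer (PiS W S *v ones) (PiS W S *v ones)"
    by (simp add: ones_mat_outer outer_mult_left outer_mult_right)
  then show ?thesis by (simp add: outer_scale outer_scale2 power2_eq_square)
qed

lemma int_lin:
  assumes "bounded_linear T" "integrable D f"
  shows "integrable D (\<lambda>S. T (f S)) \<and> integral\<^sup>L D (\<lambda>S. T (f S)) = T (integral\<^sup>L D f)"
  using assms integrable_bounded_linear integral_bounded_linear by blast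

lemma int_Qquad: "integrable D (\<lambda>S. m \<bullet> (QQ S *v m)) \<and> (\<integral>S. m \<bullet> (QQ S *v m) \<partial>D) = m \<bullet> (Qb *v m)"
  using int_lin[OF bl_quad[of m "mat 1" m] int_Q] by simp

lemma int_Hquad: "integrable D (\<lambda>S. m \<bullet> ((PiS W S ** Wi) *v m)) \<and> (\<integral>S. m \<bullet> ((PiS W S ** Wi) *v m) \<partial>D) = m \<bullet> (Kb *v m)"
  using int_lin[OF bl_quad[of m Wi m] int_P] by simp

lemma int_vinner: "integrable D (\<lambda>S. c \<bullet> vv S) \<and> (\<integral>S. c \<bullet> vv S \<partial>D) = c \<bullet> ones"
proof
  show "integrable D (\<lambda>S. c \<bullet> vv S)" by (rule integrable_inner_right[OF int_v])
  have "(\<integral>S. c \<bullet> vv S \<partial>D) = c \<bullet> integral\<^sup>L D vv" by (rule integral_inner_right) (rule int_v)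
  then show "(\<integral>S. c \<bullet> vv S \<partial>D) = c \<bullet> ones" using unb by simp
qed

lemma norm_Mv_sq: "(norm (M *v vv S))\<^sup>2 = (\<Sum>r\<in>UNIV. (M$r) \<bullet> (QQ S *v (M$r)))"
  for M :: "real^'n^'d"
  unfolding norm_sq_rows QQ_outer quad_outer by (simp add: inner_commute)

lemma int_quad:
  fixes M :: "real^'n^'d" and y :: "real^'d"
  shows "integrable D (\<lambda>S. (norm (y + M *v vv S))\<^sup>2) \<and>
    (\<integral>S. (norm (y + M *v vv S))\<^sup>2 \<partial>D) = (norm y)\<^sup>2 + 2 * (y \<bullet> (M *v ones)) + (\<Sum>r\<in>UNIV. (M$r) \<bullet> (Qb *v (M$r)))"
proof -
  have eq: "(norm (y + M *v vv S))\<^sup>2 = (norm y)\<^sup>2 + 2 * ((transpose M *v y) \<bullet> vv S) + (\<Sum>r\<in>UNIV. (M$r) \<bullet> (QQ S *v (M$r)))" for S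
  proof -
    have "(norm (y + M *v vv S))\<^sup>2 = (norm y)\<^sup>2 + 2 * (y \<bullet> (M *v vv S)) + (norm (M *v vv S))\<^sup>2"
      by (simp add: power2_norm_eq_inner inner_add_left inner_add_right inner_commute)
    also have "y \<bullet> (M *v vv S) = (transpose M *v y) \<bullet> vv S"
      using inner_mv_transpose[of M "vv S" y] by (simp add: inner_commute)
    finally show ?thesis by (simp add: norm_Mv_sq)
  qed
  have i1: "integrable D (\<lambda>S. (transpose M *v y) \<bullet> vv S)" using int_vinner by blast
  have i2: "integrable D (\<lambda>S. (\<Sum>r\<in>UNIV. (M$r) \<bullet> (QQ S *v (M$r))))"
    by (rule Bochner_Integration.integrable_sum) (use int_Qquad in blast)
  interpret prob_space D by (rule D_prob)
  have "integrable D (\<lambda>S. (norm y)\<^sup>2 + 2 * ((transpose M *v y) \<bullet> vv S) + (\<Sum>r\<in>UNIV. (M$r) \<bullet> (QQ S *v (M$r))))"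
    using i1 i2 by auto
  moreover have "(\<integral>S. (norm y)\<^sup>2 + 2 * ((transpose M *v y) \<bullet> vv S) + (\<Sum>r\<in>UNIV. (M$r) \<bullet> (QQ S *v (M$r))) \<partial>D)
     = (norm y)\<^sup>2 + 2 * (y \<bullet> (M *v ones)) + (\<Sum>r\<in>UNIV. (M$r) \<bullet> (Qb *v (M$r)))"
  proof -
    have "(\<integral>S. (norm y)\<^sup>2 + 2 * ((transpose M *v y) \<bullet> vv S) + (\<Sum>r\<in>UNIV. (M$r) \<bullet> (QQ S *v (M$r))) \<partial>D)
      = (norm y)\<^sup>2 + 2 * (\<integral>S. (transpose M *v y) \<bullet> vv S \<partial>D) + (\<Sum>r\<in>UNIV. (\<integral>S. (M$r) \<bullet> (QQ S *v (M$r)) \<partial>D))"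
      using i1 i2 int_Qquad by (simp add: Bochner_Integration.integral_sum prob_space.prob_space[OF D_prob])
    also have "\<dots> = (norm y)\<^sup>2 + 2 * (y \<bullet> (M *v ones)) + (\<Sum>r\<in>UNIV. (M$r) \<bullet> (Qb *v (M$r)))"
      using int_vinner int_Qquad inner_mv_transpose[of M ones y] by (simp add: inner_commute prob_space.prob_space[OF D_prob])
    finally show ?thesis .
  qed
  ultimately show ?thesis unfolding eq by simp
qed

lemma Qb_sym: "transpose Qb = Qb"
proof -
  have bl: "bounded_linear (transpose :: real^'n^'n \<Rightarrow> real^'n^'n)"
    by (rule linear_transpose)
  have "transpose Qb = (\<integral>S. transpose (QQ S) \<partial>D)"
    using int_lin[OF bl int_Q] by simp
  also have "\<dots> = Qb" by (simp add: QQ_outer transpose_outer)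
  finally show ?thesis .
qed

lemma Kb_facts: "transpose Kb = Kb" "Kb ** W = Pb"
proof -
  have "linear (\<lambda>P::real^'n^'n. P ** Wi)"
    by (rule linearI) (simp_all add: matrix_add_rdistrib' scalar_matrix_assoc[symmetric])
  then have bl: "bounded_linear (\<lambda>P::real^'n^'n. P ** Wi)" by (simp add: linear_conv_bounded_linear)
  have bl2: "bounded_linear (\<lambda>P::real^'n^'n. transpose (P ** Wi))"
    using bounded_linear_compose[OF linear_transpose bl] by (simp add: o_def)
  have "transpose Kb = (\<integral>S. transpose (PiS W S ** Wi) \<partial>D)"
    using int_lin[OF bl2 int_P] by simp
  also have "\<dots> = (\<integral>S. PiS W S ** Wi \<partial>D)"
  proof -
    have "transpose (PiS W S ** Wi) = PiS W S ** Wi" for S :: "real^'t^'n"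
      using PiS_facts(1,2)[OF pd, of S] by simp
    then show ?thesis by simp
  qed
  also have "\<dots> = Kb" using int_lin[OF bl int_P] by simp
  finally show "transpose Kb = Kb" .
  show "Kb ** W = Pb" using pd_facts(3)[OF pd] by (simp add: matrix_mul_assoc[symmetric])
qed

lemma Mb_psd: "0 \<le> z \<bullet> ((Qb - ones_mat) *v z)"
proof -
  interpret prob_space D by (rule D_prob)
  have eq: "(z \<bullet> vv S - z \<bullet> ones)\<^sup>2 = z \<bullet> (QQ S *v z) - 2 * (z \<bullet> ones) * (z \<bullet> vv S) + (z \<bullet> ones)\<^sup>2" for S
    unfolding QQ_outer quad_outer by (simp add: power2_eq_square algebra_simps inner_commute)
  have i: "integrable D (\<lambda>S. z \<bullet> (QQ S *v z) - 2 * (z \<bullet> ones) * (z \<bullet> vv S) + (z \<bullet> ones)\<^sup>2)"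
    using int_Qquad int_vinner by auto
  have "0 \<le> (\<integral>S. (z \<bullet> vv S - z \<bullet> ones)\<^sup>2 \<partial>D)" by (rule integral_nonneg_AE) auto
  also have "\<dots> = (\<integral>S. z \<bullet> (QQ S *v z) - 2 * (z \<bullet> ones) * (z \<bullet> vv S) + (z \<bullet> ones)\<^sup>2 \<partial>D)"
    unfolding eq ..
  also have "\<dots> = z \<bullet> (Qb *v z) - (z \<bullet> ones)\<^sup>2"
    using int_Qquad int_vinner by (simp add: power2_eq_square prob_space.prob_space[OF D_prob])
  also have "\<dots> = z \<bullet> ((Qb - ones_mat) *v z)"
    by (simp add: matrix_vector_mult_diff_rdistrib inner_diff_right ones_mat_outer quad_outer
        inner_commute power2_eq_square)
  finally show ?thesis .
qed

lemma Mb_sym: "transpose (Qb - ones_mat) = Qb - ones_mat"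
  using Qb_sym by (simp add: transpose_def vec_eq_iff ones_mat_def)

end

lemma row_identity:
  fixes P Wi H :: "real^'n^'n"
  assumes a: "Wi ** transpose P = H" and b: "P ** Wi ** transpose P = H" and sH: "transpose H = H"
    and sWi: "transpose Wi = Wi"
  shows "(y + transpose P *v (z - y)) \<bullet> (Wi *v (y + transpose P *v (z - y)))
       = y \<bullet> (Wi *v y) - y \<bullet> (H *v y) + z \<bullet> (H *v z)"
proof -
  define d where "d = z - y"
  define b' where "b' = transpose P *v d"
  have e1: "y \<bullet> (Wi *v b') = y \<bullet> (H *v d)"
    using a by (simp add: b'_def matrix_vector_mul_assoc del: transpose_matrix_vector)
  have e2: "b' \<bullet> (Wi *v y) = y \<bullet> (H *v d)"
    using inner_mv_sym[OF sWi, of b' y] e1 by (simp add: inner_commute)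
  have e3: "b' \<bullet> (Wi *v b') = d \<bullet> (H *v d)"
  proof -
    have "b' \<bullet> (Wi *v b') = d \<bullet> (P *v (Wi *v (transpose P *v d)))"
      using inner_mv_transpose[of "transpose P" d "Wi *v b'"] by (simp add: b'_def)
    also have "\<dots> = d \<bullet> (H *v d)" using b by (simp add: matrix_vector_mul_assoc matrix_mul_assoc del: transpose_matrix_vector)
    finally show ?thesis .
  qed
  have hs: "z \<bullet> (H *v y) = y \<bullet> (H *v z)"
    using inner_mv_sym[OF sH, of z y] by (simp add: inner_commute)
  have "(y + b') \<bullet> (Wi *v (y + b')) = y \<bullet> (Wi *v y) + y \<bullet> (Wi *v b') + b' \<bullet> (Wi *v y) + b' \<bullet> (Wi *v b')"
    by (simp add: matrix_vector_right_distrib inner_add_left inner_add_right)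
  also have "\<dots> = y \<bullet> (Wi *v y) - y \<bullet> (H *v y) + z \<bullet> (H *v z)"
    unfolding e1 e2 e3 d_def
    using hs by (simp add: matrix_vector_mult_diff_distrib inner_diff_left inner_diff_right)
  finally show ?thesis by (simp add: b'_def d_def)
qed

lemma norm_add_sq_le: "(norm (a + b))\<^sup>2 \<le> 2 * (norm a)\<^sup>2 + 2 * (norm (b::'a::real_inner))\<^sup>2"
proof -
  have "(norm (a + b))\<^sup>2 + (norm (a - b))\<^sup>2 = 2 * (norm a)\<^sup>2 + 2 * (norm b)\<^sup>2"
    by (simp add: power2_norm_eq_inner inner_add_left inner_add_right inner_diff_left inner_diff_right inner_commute)
  then show ?thesis using zero_le_power2[of "norm (a - b)"] by linarith
qed

lemma arith_final:
  fixes r2 YW Dl A Ea Eb ER2 \<alpha> \<mu> L1 L2 \<kappa> \<rho> n :: real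
  assumes A: "Dl + \<mu>/2 * r2 \<le> A" and Ea: "Ea \<le> 2 * L1 * Dl" and Eb: "Eb \<le> \<rho> / n\<^sup>2 * YW"
    and E2: "ER2 \<le> (1 - \<kappa>) * YW + 2 * L2 * Dl"
    and a0: "0 \<le> \<alpha>" and a1: "4 * \<alpha> * L1 \<le> 1" and a2: "\<alpha> * (4 * L2 * \<rho> / n\<^sup>2 + \<mu>) \<le> \<kappa>"
    and L2: "L2 > 0" and D0: "0 \<le> Dl" and Y0: "0 \<le> YW"
  shows "r2 - 2 * \<alpha> * A + 2 * \<alpha>\<^sup>2 * Ea + 2 * \<alpha>\<^sup>2 * Eb + \<alpha> / (2 * L2) * ER2
        \<le> (1 - \<mu> * \<alpha>) * (r2 + \<alpha> / (2 * L2) * YW)"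
proof -
  define c where "c = \<alpha> / (2 * L2)"
  have c0: "0 \<le> c" using a0 L2 by (simp add: c_def)
  have cL: "2 * c * L2 = \<alpha>" using L2 by (simp add: c_def)
  have s1: "2 * \<alpha> * (Dl + \<mu>/2 * r2) \<le> 2 * \<alpha> * A" using A a0 by (intro mult_left_mono) simp_all
  have s2: "2 * \<alpha>\<^sup>2 * Ea \<le> 2 * \<alpha>\<^sup>2 * (2 * L1 * Dl)" using Ea by (intro mult_left_mono) simp_all
  have s3: "2 * \<alpha>\<^sup>2 * Eb \<le> 2 * \<alpha>\<^sup>2 * (\<rho> / n\<^sup>2 * YW)" using Eb by (intro mult_left_mono) simp_all
  have s4: "c * ER2 \<le> c * ((1 - \<kappa>) * YW + 2 * L2 * Dl)" using E2 c0 by (intro mult_left_mono) simp_all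
  have t1: "\<alpha> * Dl * (4 * \<alpha> * L1 - 1) \<le> 0"
    using a0 D0 a1 by (simp add: mult_nonneg_nonpos)
  have t2: "c * YW * (\<alpha> * (4 * L2 * \<rho> / n\<^sup>2 + \<mu>) - \<kappa>) \<le> 0"
    using c0 Y0 a2 by (simp add: mult_nonneg_nonpos)
  have e2: "2 * \<alpha>\<^sup>2 * (\<rho> / n\<^sup>2 * YW) = c * YW * (4 * L2 * \<alpha> * \<rho> / n\<^sup>2)"
    using cL by (simp add: power2_eq_square field_simps)
  have "r2 - 2 * \<alpha> * A + 2 * \<alpha>\<^sup>2 * Ea + 2 * \<alpha>\<^sup>2 * Eb + c * ER2
     \<le> r2 - 2 * \<alpha> * (Dl + \<mu>/2 * r2) + 2 * \<alpha>\<^sup>2 * (2 * L1 * Dl) + 2 * \<alpha>\<^sup>2 * (\<rho> / n\<^sup>2 * YW)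
        + c * ((1 - \<kappa>) * YW + 2 * L2 * Dl)" using s1 s2 s3 s4 by linarith
  also have "\<dots> = (1 - \<mu> * \<alpha>) * (r2 + c * YW) + \<alpha> * Dl * (4 * \<alpha> * L1 - 1)
        + c * YW * (\<alpha> * (4 * L2 * \<rho> / n\<^sup>2 + \<mu>) - \<kappa>)"
    unfolding e2 using cL by (simp add: algebra_simps power2_eq_square)
  also have "\<dots> \<le> (1 - \<mu> * \<alpha>) * (r2 + c * YW)" using t1 t2 by linarith
  finally show ?thesis by (simp add: c_def)
qed

lemma mv_neg: "A *v (- x) = - (A *v x)" for A :: "real^'n^'m"
  by (simp add: matrix_vector_mult_def vec_eq_iff sum_negf)

context js begin


definition stp :: "real \<Rightarrow> (real^'d \<Rightarrow> real^'n^'d) \<Rightarrow> ((real^'d) \<times> (real^'n^'d)) \<Rightarrow> real^'t^'n \<Rightarrow> ((real^'d) \<times> (real^'n^'d))" where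
  "stp \<alpha> GG s S = (fst s - \<alpha> *\<^sub>R ((1 / (real CARD('n))) *\<^sub>R (snd s *v ones) + (\<theta> S / (real CARD('n))) *\<^sub>R ((GG (fst s) - snd s) ** PiS W S *v ones)),
                  snd s + (GG (fst s) - snd s) ** PiS W S)"

lemma one_step:
  fixes GG :: "real^'d \<Rightarrow> real^'n^'d" and x xs :: "real^'d" and J :: "real^'n^'d"
  assumes Gs0: "GG xs *v ones = 0"
    and qsc: "Dl + \<mu>/2 * (norm (x - xs))\<^sup>2 \<le> (1/(real CARD('n))) * ((GG x *v ones) \<bullet> (x - xs))"
    and D0: "0 \<le> Dl"
    and L1b: "(\<integral>\<^sup>+S. ennreal ((norm ((\<theta> S / (real CARD('n))) *\<^sub>R (GG x ** PiS W S *v ones) - (\<theta> S / (real CARD('n))) *\<^sub>R (GG xs ** PiS W S *v ones)))\<^sup>2) \<partial>D) \<le> ennreal (2 * L1 * Dl)"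
    and L2b: "(\<integral>\<^sup>+S. ennreal ((wnorm W ((GG x - GG xs) ** PiS W S))\<^sup>2) \<partial>D) \<le> ennreal (2 * L2 * Dl)"
    and a0: "0 \<le> \<alpha>" and a1: "4 * \<alpha> * L1 \<le> 1" and a2: "\<alpha> * (4 * L2 * rho W \<theta> D / (real CARD('n))\<^sup>2 + \<mu>) \<le> kappa W D"
    and L1: "L1 > 0" and L2: "L2 > 0"
  shows "(\<integral>\<^sup>+S. ennreal (Psi W GG xs \<alpha> L2 (stp \<alpha> GG (x, J) S)) \<partial>D) \<le> ennreal ((1 - \<mu> * \<alpha>) * Psi W GG xs \<alpha> L2 (x, J))"
    "0 \<le> (1 - \<mu> * \<alpha>) * Psi W GG xs \<alpha> L2 (x, J)"
proof -
  interpret prob_space D by (rule D_prob)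
  define G where "G = GG x"
  define Gs where "Gs = GG xs"
  define Y where "Y = J - Gs"
  define Z where "Z = G - Gs"
  define c where "c = \<alpha> / (2 * L2)"
  have c0: "0 \<le> c" using a0 L2 by (simp add: c_def)
  have n0: "(real CARD('n)) > 0" by simp
  define aS where "aS S = (1/(real CARD('n))) *\<^sub>R (Z *v vv S)" for S :: "real^'t^'n"
  define k where "k = 1/(real CARD('n))"
  define u where "u = Y *v ones"
  define bS where "bS S = k *\<^sub>R (Y *v ones) + ((- k) *\<^sub>R Y) *v vv S" for S :: "real^'t^'n"
  define gS where "gS S = (1 / (real CARD('n))) *\<^sub>R (J *v ones) + (\<theta> S / (real CARD('n))) *\<^sub>R ((G - J) ** PiS W S *v ones)" for S :: "real^'t^'n"
  have gS_alt: "gS S = (1 / (real CARD('n))) *\<^sub>R (J *v ones) + (1 / (real CARD('n))) *\<^sub>R ((G - J) *v vv S)" for S :: "real^'t^'n"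
    by (simp add: gS_def matrix_vector_mul_assoc[symmetric] matrix_vector_mult_scaleR)
  have gab: "gS S = aS S + bS S" for S :: "real^'t^'n"
  proof -
    have "aS S + bS S = (1/(real CARD('n))) *\<^sub>R (Z *v vv S + Y *v ones - Y *v vv S)"
      by (simp add: aS_def bS_def k_def scaleR_matrix_vector_assoc[symmetric] neg_mv algebra_simps)
    also have "Z *v vv S + Y *v ones - Y *v vv S = J *v ones + (G - J) *v vv S"
      using Gs0 by (simp add: Z_def Y_def Gs_def matrix_vector_mult_diff_rdistrib algebra_simps)
    finally show ?thesis by (simp add: gS_alt scaleR_add_right)
  qed
  define HY where "HY S = (\<Sum>r\<in>UNIV. (Y$r) \<bullet> ((PiS W S ** Wi) *v (Y$r)))" for S :: "real^'t^'n"
  define HZ where "HZ S = (\<Sum>r\<in>UNIV. (Z$r) \<bullet> ((PiS W S ** Wi) *v (Z$r)))" for S :: "real^'t^'n"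
  define YW where "YW = (\<Sum>r\<in>UNIV. (Y$r) \<bullet> (Wi *v (Y$r)))"
  define r2 where "r2 = (norm (x - xs))\<^sup>2"
  define R where "R S = r2 - 2 * \<alpha> * (gS S \<bullet> (x - xs)) + 2 * \<alpha>\<^sup>2 * (norm (aS S))\<^sup>2 + 2 * \<alpha>\<^sup>2 * (norm (bS S))\<^sup>2
      + c * (YW - HY S + HZ S)" for S :: "real^'t^'n"
  have YW0: "0 \<le> YW" unfolding YW_def using pd_facts(7)[OF pd] by (intro sum_nonneg) auto
  have Psi0: "Psi W GG xs \<alpha> L2 (x, J) = r2 + c * YW"
    by (simp add: Psi_def r2_def c_def wnorm_sq[OF pd] YW_def Y_def Gs_def)
  have wrow: "(wnorm W (J + (G - J) ** PiS W S - Gs))\<^sup>2 = YW - HY S + HZ S" for S :: "real^'t^'n"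
  proof -
    have rows: "(J + (G - J) ** PiS W S - Gs) $ r = Y$r + transpose (PiS W S) *v (Z$r - Y$r)" for r
      by (simp add: row_mult Y_def Z_def algebra_simps)
    have "(wnorm W (J + (G - J) ** PiS W S - Gs))\<^sup>2
       = (\<Sum>r\<in>UNIV. (Y$r + transpose (PiS W S) *v (Z$r - Y$r)) \<bullet> (Wi *v (Y$r + transpose (PiS W S) *v (Z$r - Y$r))))"
      by (simp only: wnorm_sq[OF pd] rows)
    also have "\<dots> = (\<Sum>r\<in>UNIV. (Y$r) \<bullet> (Wi *v (Y$r)) - (Y$r) \<bullet> ((PiS W S ** Wi) *v (Y$r)) + (Z$r) \<bullet> ((PiS W S ** Wi) *v (Z$r)))"
      unfolding PiS_facts(2)[OF pd, of S]
      by (intro sum.cong refl row_identity[OF PiS_facts(3,4)[OF pd, of S] PiS_facts(1)[OF pd, of S] pd_facts(4)[OF pd]])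
    also have "\<dots> = YW - HY S + HZ S"
      by (simp add: YW_def HY_def HZ_def sum.distrib sum_subtractf)
    finally show ?thesis .
  qed
  have ptw: "Psi W GG xs \<alpha> L2 (stp \<alpha> GG (x, J) S) \<le> R S" for S :: "real^'t^'n"
  proof -
    have fst: "fst (stp \<alpha> GG (x, J) S) - xs = (x - xs) - \<alpha> *\<^sub>R gS S"
      by (simp add: stp_def gS_def G_def)
    have snd: "snd (stp \<alpha> GG (x, J) S) - GG xs = J + (G - J) ** PiS W S - Gs"
      by (simp add: stp_def G_def Gs_def)
    have "(norm ((x - xs) - \<alpha> *\<^sub>R gS S))\<^sup>2 = r2 - 2 * \<alpha> * (gS S \<bullet> (x - xs)) + \<alpha>\<^sup>2 * (norm (gS S))\<^sup>2"
      unfolding r2_def power2_norm_eq_inner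
      by (simp add: inner_diff_left inner_diff_right inner_commute power2_eq_square algebra_simps)
    also have "\<dots> \<le> r2 - 2 * \<alpha> * (gS S \<bullet> (x - xs)) + \<alpha>\<^sup>2 * (2 * (norm (aS S))\<^sup>2 + 2 * (norm (bS S))\<^sup>2)"
      using norm_add_sq_le[of "aS S" "bS S"] by (simp add: gab mult_left_mono)
    finally have "(norm ((x - xs) - \<alpha> *\<^sub>R gS S))\<^sup>2 \<le> r2 - 2 * \<alpha> * (gS S \<bullet> (x - xs)) + 2 * \<alpha>\<^sup>2 * (norm (aS S))\<^sup>2 + 2 * \<alpha>\<^sup>2 * (norm (bS S))\<^sup>2"
      by (simp add: algebra_simps)
    then show ?thesis
      unfolding Psi_def fst snd wrow R_def c_def[symmetric] by simp
  qed
  have ig: "integrable D (\<lambda>S. gS S \<bullet> (x - xs)) \<and> (\<integral>S. gS S \<bullet> (x - xs) \<partial>D) = (1/(real CARD('n))) * ((G *v ones) \<bullet> (x - xs))"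
  proof -
    define w where "w = x - xs"
    have e: "gS S \<bullet> w = (1/(real CARD('n))) * ((J *v ones) \<bullet> w) + (1/(real CARD('n))) * ((transpose (G - J) *v w) \<bullet> vv S)" for S :: "real^'t^'n"
      unfolding gS_alt
      using inner_mv_transpose[of "G - J" "vv S" w]
      by (simp only: inner_add_left inner_scaleR_left) (simp add: inner_commute)
    have i1: "integrable D (\<lambda>S. (transpose (G - J) *v w) \<bullet> vv S)" using int_vinner by blast
    have i2: "(\<integral>S. (transpose (G - J) *v w) \<bullet> vv S \<partial>D) = (transpose (G - J) *v w) \<bullet> ones" using int_vinner by blast
    have "(transpose (G - J) *v w) \<bullet> ones = ((G - J) *v ones) \<bullet> w"
      using inner_mv_transpose[of "G - J" ones w] by (simp add: inner_commute)
    then have "(J *v ones) \<bullet> w + (transpose (G - J) *v w) \<bullet> ones = (G *v ones) \<bullet> w"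
      by (simp add: matrix_vector_mult_diff_rdistrib inner_diff_left)
    then have i3: "(1/(real CARD('n))) * ((J *v ones) \<bullet> w) + (1/(real CARD('n))) * ((transpose (G - J) *v w) \<bullet> ones) = (1/(real CARD('n))) * ((G *v ones) \<bullet> w)"
      by (metis distrib_left)
    show ?thesis unfolding w_def[symmetric] e using i1 i2 i3 by (simp add: prob_space.prob_space[OF D_prob])
  qed
  have ia: "integrable D (\<lambda>S. (norm (aS S))\<^sup>2)"
    using int_quad[of 0 "(1/(real CARD('n))) *\<^sub>R Z"] by (simp add: aS_def scaleR_matrix_vector_assoc[symmetric])
  have ib: "integrable D (\<lambda>S. (norm (bS S))\<^sup>2) \<and> (\<integral>S. (norm (bS S))\<^sup>2 \<partial>D)
      = (norm (k *\<^sub>R (Y *v ones)))\<^sup>2 + 2 * ((k *\<^sub>R (Y *v ones)) \<bullet> (((- k) *\<^sub>R Y) *v ones))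
        + (\<Sum>r\<in>UNIV. (((- k) *\<^sub>R Y)$r) \<bullet> (Qb *v (((- k) *\<^sub>R Y)$r)))"
    unfolding bS_def by (rule int_quad)
  have Eb: "(\<integral>S. (norm (bS S))\<^sup>2 \<partial>D) \<le> rho W \<theta> D / (real CARD('n))\<^sup>2 * YW"
  proof -
    have ye: "(norm (Y *v ones))\<^sup>2 = (\<Sum>r\<in>UNIV. (Y$r) \<bullet> (ones_mat *v (Y$r)))"
      by (simp add: norm_sq_rows ones_mat_outer quad_outer inner_commute)
    have k2: "k * k = 1/(real CARD('n))\<^sup>2" by (simp add: k_def power2_eq_square)
    have b1: "(norm (k *\<^sub>R u))\<^sup>2 = k * k * (norm u)\<^sup>2" by (simp add: power2_eq_square)
    have b2: "2 * ((k *\<^sub>R u) \<bullet> (((- k) *\<^sub>R Y) *v ones)) = - 2 * (k * k * (norm u)\<^sup>2)"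
      by (simp add: u_def neg_mv scaleR_matrix_vector_assoc[symmetric] power2_norm_eq_inner)
    have b3: "(\<Sum>r\<in>UNIV. (((- k) *\<^sub>R Y)$r) \<bullet> (Qb *v (((- k) *\<^sub>R Y)$r)))
        = k * k * (\<Sum>r\<in>UNIV. (Y$r) \<bullet> (Qb *v (Y$r)))"
      by (simp add: sum_distrib_left matrix_vector_mult_scaleR mv_neg mult.assoc)
    have "(\<integral>S. (norm (bS S))\<^sup>2 \<partial>D) = k * k * (norm u)\<^sup>2 - 2 * (k * k * (norm u)\<^sup>2) + k * k * (\<Sum>r\<in>UNIV. (Y$r) \<bullet> (Qb *v (Y$r)))"
      using ib[unfolded u_def[symmetric] b1 b2 b3] by simp
    also have "\<dots> = (1/(real CARD('n))\<^sup>2) * ((\<Sum>r\<in>UNIV. (Y$r) \<bullet> (Qb *v (Y$r))) - (norm (Y *v ones))\<^sup>2)"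
      unfolding k2[symmetric] u_def by (simp add: algebra_simps)
    also have "\<dots> = (1/(real CARD('n))\<^sup>2) * (\<Sum>r\<in>UNIV. (Y$r) \<bullet> ((Qb - ones_mat) *v (Y$r)))"
      unfolding ye by (simp add: matrix_vector_mult_diff_rdistrib inner_diff_right sum_subtractf)
    also have "\<dots> \<le> (1/(real CARD('n))\<^sup>2) * (\<Sum>r\<in>UNIV. rho W \<theta> D * ((Y$r) \<bullet> (Wi *v (Y$r))))"
      using rho_bound[OF pd Mb_sym] by (intro mult_left_mono sum_mono) (simp_all add: rho_def)
    also have "\<dots> = rho W \<theta> D / (real CARD('n))\<^sup>2 * YW" by (simp add: YW_def sum_distrib_left)
    finally show ?thesis .
  qed
  have Ea: "(\<integral>S. (norm (aS S))\<^sup>2 \<partial>D) \<le> 2 * L1 * Dl"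
  proof -
    have eq: "(norm ((\<theta> S / (real CARD('n))) *\<^sub>R (GG x ** PiS W S *v ones) - (\<theta> S / (real CARD('n))) *\<^sub>R (GG xs ** PiS W S *v ones)))\<^sup>2
        = (norm (aS S))\<^sup>2" for S :: "real^'t^'n"
      by (simp add: aS_def Z_def G_def Gs_def matrix_vector_mul_assoc[symmetric] matrix_vector_mult_scaleR
          matrix_vector_mult_diff_rdistrib scaleR_diff_right)
    have "ennreal (\<integral>S. (norm (aS S))\<^sup>2 \<partial>D) = (\<integral>\<^sup>+S. ennreal ((norm (aS S))\<^sup>2) \<partial>D)"
      using ia by (simp add: nn_integral_eq_integral)
    also have "\<dots> \<le> ennreal (2 * L1 * Dl)" using L1b unfolding eq .
    finally show ?thesis using L1 D0 by (simp add: ennreal_le_iff)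
  qed
  have iHY: "integrable D HY \<and> integral\<^sup>L D HY = (\<Sum>r\<in>UNIV. (Y$r) \<bullet> (Kb *v (Y$r)))"
    unfolding HY_def using int_Hquad by (simp add: Bochner_Integration.integral_sum)
  have iHZ: "integrable D HZ \<and> integral\<^sup>L D HZ = (\<Sum>r\<in>UNIV. (Z$r) \<bullet> (Kb *v (Z$r)))"
    unfolding HZ_def using int_Hquad by (simp add: Bochner_Integration.integral_sum)
  have EHZ: "integral\<^sup>L D HZ \<le> 2 * L2 * Dl"
  proof -
    have eq: "(wnorm W ((GG x - GG xs) ** PiS W S))\<^sup>2 = HZ S" for S :: "real^'t^'n"
    proof -
      have "(wnorm W ((GG x - GG xs) ** PiS W S))\<^sup>2
          = (\<Sum>r\<in>UNIV. (transpose (PiS W S) *v (Z$r)) \<bullet> (Wi *v (transpose (PiS W S) *v (Z$r))))"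
        by (simp only: wnorm_sq[OF pd] row_mult Z_def G_def Gs_def)
      also have "\<dots> = HZ S"
        unfolding HZ_def
      proof (intro sum.cong refl)
        fix r
        have "(transpose (PiS W S) *v (Z$r)) \<bullet> (Wi *v (transpose (PiS W S) *v (Z$r)))
           = (Z$r) \<bullet> (PiS W S *v (Wi *v (transpose (PiS W S) *v (Z$r))))"
          using inner_mv_transpose[of "transpose (PiS W S)" "Z$r"] by simp
        also have "\<dots> = (Z$r) \<bullet> ((PiS W S ** Wi) *v (Z$r))"
          using PiS_facts(2,4)[OF pd, of S]
          by (simp add: matrix_vector_mul_assoc matrix_mul_assoc del: transpose_matrix_vector)
        finally show "(transpose (PiS W S) *v (Z$r)) \<bullet> (Wi *v (transpose (PiS W S) *v (Z$r)))
           = (Z$r) \<bullet> ((PiS W S ** Wi) *v (Z$r))" .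
      qed
      finally show ?thesis .
    qed
    have "(\<integral>\<^sup>+S. ennreal (HZ S) \<partial>D) = ennreal (integral\<^sup>L D HZ)"
    proof (rule nn_integral_eq_integral)
      show "integrable D HZ" using iHZ by blast
      show "AE S in D. 0 \<le> HZ S" by (intro AE_I2) (simp add: eq[symmetric])
    qed
    then have "ennreal (integral\<^sup>L D HZ) = (\<integral>\<^sup>+S. ennreal (HZ S) \<partial>D)" by simp
    also have "\<dots> \<le> ennreal (2 * L2 * Dl)" using L2b unfolding eq .
    finally show ?thesis using L2 D0 by (simp add: ennreal_le_iff)
  qed
  have EHY: "kappa W D * YW \<le> integral\<^sup>L D HY"
  proof -
    have "kappa W D * YW = (\<Sum>r\<in>UNIV. lambda_min (Kb ** W) * ((Y$r) \<bullet> (Wi *v (Y$r))))"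
      by (simp add: kappa_def Kb_facts(2) YW_def sum_distrib_left)
    also have "\<dots> \<le> (\<Sum>r\<in>UNIV. (Y$r) \<bullet> (Kb *v (Y$r)))"
      using kappa_bound[OF pd Kb_facts(1)] by (intro sum_mono) simp
    finally show ?thesis using iHY by simp
  qed
  have iR: "integrable D R" unfolding R_def using ig ia ib iHY iHZ by simp
  have intR: "integral\<^sup>L D R = r2 - 2 * \<alpha> * ((1/(real CARD('n))) * ((G *v ones) \<bullet> (x - xs)))
      + 2 * \<alpha>\<^sup>2 * (\<integral>S. (norm (aS S))\<^sup>2 \<partial>D) + 2 * \<alpha>\<^sup>2 * (\<integral>S. (norm (bS S))\<^sup>2 \<partial>D)
      + c * (YW - integral\<^sup>L D HY + integral\<^sup>L D HZ)"
    unfolding R_def using ig ia ib iHY iHZ by (simp add: prob_space.prob_space[OF D_prob])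
  have bound: "integral\<^sup>L D R \<le> (1 - \<mu> * \<alpha>) * Psi W GG xs \<alpha> L2 (x, J)"
    unfolding intR Psi0 c_def
  proof (rule arith_final[OF qsc[folded G_def r2_def] Ea Eb _ a0 a1 a2 L2 D0 YW0])
    show "YW - integral\<^sup>L D HY + integral\<^sup>L D HZ \<le> (1 - kappa W D) * YW + 2 * L2 * Dl"
      using EHY EHZ by (simp add: algebra_simps)
  qed
  have R0: "0 \<le> R S" for S using ptw[of S] by (rule order_trans[rotated]) (use a0 L2 in \<open>simp add: Psi_def\<close>)
  have "(\<integral>\<^sup>+S. ennreal (Psi W GG xs \<alpha> L2 (stp \<alpha> GG (x, J) S)) \<partial>D) \<le> (\<integral>\<^sup>+S. ennreal (R S) \<partial>D)"
    by (intro nn_integral_mono ennreal_leI ptw)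
  also have "\<dots> = ennreal (integral\<^sup>L D R)"
    using iR R0 by (simp add: nn_integral_eq_integral)
  also have "\<dots> \<le> ennreal ((1 - \<mu> * \<alpha>) * Psi W GG xs \<alpha> L2 (x, J))"
    using bound by (rule ennreal_leI)
  finally show "(\<integral>\<^sup>+S. ennreal (Psi W GG xs \<alpha> L2 (stp \<alpha> GG (x, J) S)) \<partial>D) \<le> ennreal ((1 - \<mu> * \<alpha>) * Psi W GG xs \<alpha> L2 (x, J))" .
  have "0 \<le> integral\<^sup>L D R" using R0 by (simp add: integral_nonneg_AE)
  then show "0 \<le> (1 - \<mu> * \<alpha>) * Psi W GG xs \<alpha> L2 (x, J)" using bound by linarith
qed

end

lemma comp_meas: "A \<in> borel_measurable M \<Longrightarrow> (\<lambda>x. A x $ i) \<in> borel_measurable M"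
  for A :: "'b \<Rightarrow> 'a::euclidean_space^'n"
  by (rule borel_measurable_continuous_on[OF continuous_on_component[OF continuous_on_id]])

lemma vec_sum_axis: "x = (\<Sum>i\<in>UNIV. axis i (x $ i))" for x :: "'a::comm_monoid_add^'n"
  by (simp add: vec_eq_iff axis_def sum.delta' if_distrib cong: if_cong)

lemma axis_cont: "continuous_on UNIV (axis i :: 'a::real_normed_vector \<Rightarrow> 'a^'n)"
proof -
  have "continuous_on UNIV (\<lambda>c::'a. (\<chi> j. if j = i then c else 0) :: 'a^'n)"
  proof (intro continuous_on_vec_lambda)
    fix j show "continuous_on UNIV (\<lambda>c::'a. if j = i then c else 0)"
      by (cases "j = i") (simp_all add: continuous_on_id continuous_on_const)
  qed
  then show ?thesis by (simp add: axis_def[abs_def])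
qed

lemma vec_meas:
  fixes F :: "'b \<Rightarrow> 'a::euclidean_space^'n"
  assumes "\<And>i. (\<lambda>x. F x $ i) \<in> borel_measurable M"
  shows "F \<in> borel_measurable M"
proof -
  have "(\<lambda>x. \<Sum>i\<in>UNIV. axis i (F x $ i)) \<in> borel_measurable M"
    by (intro borel_measurable_sum borel_measurable_continuous_on[OF axis_cont] assms)
  then show ?thesis by (subst (asm) vec_sum_axis[symmetric, THEN ext[of "\<lambda>x. _ x"]]) simp
qed

lemma mm_meas:
  fixes A :: "'b \<Rightarrow> real^'k^'m" and B :: "'b \<Rightarrow> real^'n^'k"
  assumes "A \<in> borel_measurable M" "B \<in> borel_measurable M"
  shows "(\<lambda>x. A x ** B x) \<in> borel_measurable M"
proof (intro vec_meas)
  fix i j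
  have "(\<lambda>x. \<Sum>k\<in>UNIV. A x $ i $ k * B x $ k $ j) \<in> borel_measurable M"
    using assms by (intro borel_measurable_sum borel_measurable_times comp_meas) auto
  then show "(\<lambda>x. (A x ** B x) $ i $ j) \<in> borel_measurable M"
    by (simp add: matrix_matrix_mult_def)
qed

lemma mv_meas:
  fixes A :: "'b \<Rightarrow> real^'k^'m" and v :: "'b \<Rightarrow> real^'k"
  assumes "A \<in> borel_measurable M" "v \<in> borel_measurable M"
  shows "(\<lambda>x. A x *v v x) \<in> borel_measurable M"
proof (intro vec_meas)
  fix i
  have "(\<lambda>x. \<Sum>k\<in>UNIV. A x $ i $ k * v x $ k) \<in> borel_measurable M"
    using assms by (intro borel_measurable_sum borel_measurable_times comp_meas) auto
  then show "(\<lambda>x. (A x *v v x) $ i) \<in> borel_measurable M"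
    by (simp add: matrix_vector_mult_def)
qed

lemma tr_meas:
  fixes A :: "'b \<Rightarrow> real^'k^'m"
  assumes "A \<in> borel_measurable M"
  shows "(\<lambda>x. transpose (A x)) \<in> borel_measurable M"
  by (intro vec_meas) (simp add: transpose_def comp_meas assms)

lemma trace_meas:
  fixes A :: "'b \<Rightarrow> real^'k^'k"
  assumes "A \<in> borel_measurable M"
  shows "(\<lambda>x. trace (A x)) \<in> borel_measurable M"
  unfolding trace_def by (intro borel_measurable_sum comp_meas assms)

lemma wnorm_meas:
  fixes X :: "'b \<Rightarrow> real^'n^'d"
  assumes "X \<in> borel_measurable M"
  shows "(\<lambda>x. wnorm W (X x)) \<in> borel_measurable M"
proof -
  have "(\<lambda>x. trace (X x ** matrix_inv W ** transpose (X x))) \<in> borel_measurable M"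
    by (intro trace_meas mm_meas tr_meas assms borel_measurable_const)
  from measurable_comp[OF this borel_measurable_sqrt] show ?thesis
    by (simp add: wnorm_def o_def)
qed

lemma grad_meas:
  fixes f :: "real^'d \<Rightarrow> real" and g :: "real^'d \<Rightarrow> real^'d"
  assumes der: "\<And>x. (f has_derivative (\<lambda>h. g x \<bullet> h)) (at x)"
  shows "g \<in> borel_measurable borel"
proof -
  define h where "h m = inverse (real (Suc m))" for m :: nat
  define u where "u m x = (\<chi> r. (f (x + h m *\<^sub>R axis r 1) - f x) / h m)" for m x
  have contf: "continuous_on UNIV f"
    by (rule has_derivative_continuous_on) (use der in blast)
  have meas: "u m \<in> borel_measurable borel" for m
  proof (rule borel_measurable_continuous_onI)
    show "continuous_on UNIV (u m)" unfolding u_def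
    proof (intro continuous_on_vec_lambda continuous_on_divide continuous_on_diff continuous_on_const)
      fix r
      show "continuous_on UNIV (\<lambda>x. f (x + h m *\<^sub>R axis r 1))"
        by (rule continuous_on_compose2[OF contf]) (auto intro!: continuous_intros)
      show "continuous_on UNIV f" by (rule contf)
    qed (simp add: h_def)
  qed
  have hlim: "filterlim h (at 0) sequentially"
    unfolding filterlim_at h_def using LIMSEQ_inverse_real_of_nat by simp
  have lim: "(\<lambda>m. u m x) \<longlonglongrightarrow> g x" for x
  proof -
    have "(\<lambda>m. u m x) \<longlonglongrightarrow> (\<chi> r. g x $ r)" unfolding u_def
    proof (intro tendsto_vec_lambda)
      fix r :: 'd
      define e where "e = (axis r 1 :: real^'d)"
      define \<phi> where "\<phi> t = f (x + t *\<^sub>R e)" for t :: real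
      have d1: "((\<lambda>t. x + t *\<^sub>R e) has_derivative (\<lambda>t. t *\<^sub>R e)) (at 0)"
        by (auto intro!: derivative_eq_intros)
      have d2: "(f has_derivative (\<lambda>h. g x \<bullet> h)) (at ((\<lambda>t. x + t *\<^sub>R e) 0))" using der by simp
      have "(\<phi> has_derivative (\<lambda>t. g x \<bullet> (t *\<^sub>R e))) (at 0)"
        using diff_chain_at[OF d1 d2] by (simp add: \<phi>_def[abs_def] o_def)
      then have "(\<phi> has_derivative (*) (g x \<bullet> e)) (at 0)"
        by (rule has_derivative_eq_rhs) (auto simp: mult.commute)
      then have "(\<phi> has_field_derivative (g x \<bullet> e)) (at 0)" by (simp add: has_field_derivative_def)
      then have "((\<lambda>y. (\<phi> y - \<phi> 0) / (y - 0)) \<longlongrightarrow> g x \<bullet> e) (at 0)"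
        by (simp add: has_field_derivative_iff)
      from filterlim_compose[OF this hlim]
      have "(\<lambda>m. (\<phi> (h m) - \<phi> 0) / (h m - 0)) \<longlonglongrightarrow> g x \<bullet> e" .
      then show "(\<lambda>m. (f (x + h m *\<^sub>R axis r 1) - f x) / h m) \<longlonglongrightarrow> g x $ r"
        by (simp add: \<phi>_def e_def inner_axis)
    qed
    then show ?thesis by simp
  qed
  show ?thesis by (rule borel_measurable_LIMSEQ_metric[OF meas]) (use lim in auto)
qed

lemma jac_meas:
  fixes gf :: "'n::finite \<Rightarrow> real^'d \<Rightarrow> real^'d::finite"
  assumes "\<And>i. gf i \<in> borel_measurable borel"
  shows "jac gf \<in> borel_measurable borel"
  unfolding jac_def[abs_def]
  by (intro vec_meas) (simp add: comp_meas assms)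

lemma fermat_sum:
  fixes f :: "'n::finite \<Rightarrow> real^'d \<Rightarrow> real" and gf :: "'n \<Rightarrow> real^'d \<Rightarrow> real^'d"
  assumes der: "\<And>i x. (f i has_derivative (\<lambda>h. gf i x \<bullet> h)) (at x)"
    and mn: "\<And>x. (\<Sum>i\<in>UNIV. f i xs) \<le> (\<Sum>i\<in>UNIV. f i x)"
  shows "(\<Sum>i\<in>UNIV. gf i xs) = 0"
proof -
  have "((\<lambda>x. \<Sum>i\<in>UNIV. f i x) has_derivative (\<lambda>h. \<Sum>i\<in>UNIV. gf i xs \<bullet> h)) (at xs)"
    by (intro has_derivative_sum) (use der in auto)
  then have "(\<lambda>h. \<Sum>i\<in>UNIV. gf i xs \<bullet> h) = (\<lambda>h. 0)"
    by (rule differential_zero_maxmin[OF UNIV_I open_UNIV]) (use mn in auto)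
  then have "(\<Sum>i\<in>UNIV. gf i xs \<bullet> (\<Sum>i\<in>UNIV. gf i xs)) = 0" by meson
  then have "(\<Sum>i\<in>UNIV. gf i xs) \<bullet> (\<Sum>i\<in>UNIV. gf i xs) = 0" by (simp add: inner_sum_left)
  then show ?thesis by simp
qed

lemma jac_ones: "jac gf x *v ones = (\<Sum>i\<in>UNIV. gf i x)"
  by (simp add: jac_def matrix_vector_mult_def ones_def vec_eq_iff)

lemma js_Suc: "jacsketch W \<theta> GG \<alpha> x0 J0 \<omega> (Suc k) =
   (let s = jacsketch W \<theta> GG \<alpha> x0 J0 \<omega> k in
     (fst s - \<alpha> *\<^sub>R ((1 / real CARD('n)) *\<^sub>R (snd s *v ones) + (\<theta> (\<omega> k) / real CARD('n)) *\<^sub>R ((GG (fst s) - snd s) ** PiS W (\<omega> k) *v ones)),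
      snd s + (GG (fst s) - snd s) ** PiS W (\<omega> k)))"
  for GG :: "real^'d \<Rightarrow> real^'n::finite^'d"
  by (simp add: Let_def split: prod.split)

lemma js_dep: "(\<And>i. i < k \<Longrightarrow> \<omega> i = \<omega>' i) \<Longrightarrow> jacsketch W \<theta> GG \<alpha> x0 J0 \<omega> k = jacsketch W \<theta> GG \<alpha> x0 J0 \<omega>' k"
proof (induction k)
  case 0 then show ?case by simp
next
  case (Suc k)
  then have "jacsketch W \<theta> GG \<alpha> x0 J0 \<omega> k = jacsketch W \<theta> GG \<alpha> x0 J0 \<omega>' k" by simp
  moreover have "\<omega> k = \<omega>' k" using Suc.prems by simp
  ultimately show ?case by (simp only: js_Suc)
qed

lemma js_meas:
  fixes GG :: "real^'d::finite \<Rightarrow> real^'n::finite^'d" and D :: "(real^'t::finite^'n) measure"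
  assumes GG: "GG \<in> borel_measurable borel" and P: "(\<lambda>S. PiS W S) \<in> borel_measurable D"
    and th: "\<theta> \<in> borel_measurable D"
  shows "{..<k} \<subseteq> I \<Longrightarrow> (\<lambda>\<omega>. fst (jacsketch W \<theta> GG \<alpha> x0 J0 \<omega> k)) \<in> borel_measurable (PiM I (\<lambda>_. D)) \<and>
     (\<lambda>\<omega>. snd (jacsketch W \<theta> GG \<alpha> x0 J0 \<omega> k)) \<in> borel_measurable (PiM I (\<lambda>_. D))"
proof (induction k)
  case 0 then show ?case by simp
next
  case (Suc k)
  have sub: "{..<k} \<subseteq> I" using Suc.prems by auto
  have kI: "k \<in> I" using Suc.prems by auto
  have IH: "(\<lambda>\<omega>. fst (jacsketch W \<theta> GG \<alpha> x0 J0 \<omega> k)) \<in> borel_measurable (PiM I (\<lambda>_. D))"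
      "(\<lambda>\<omega>. snd (jacsketch W \<theta> GG \<alpha> x0 J0 \<omega> k)) \<in> borel_measurable (PiM I (\<lambda>_. D))"
    using Suc.IH[OF sub] by auto
  have Pk: "(\<lambda>\<omega>. PiS W (\<omega> k)) \<in> borel_measurable (PiM I (\<lambda>_. D))"
    using measurable_comp[OF measurable_component_singleton[OF kI] P] by (simp add: o_def)
  have tk: "(\<lambda>\<omega>. \<theta> (\<omega> k)) \<in> borel_measurable (PiM I (\<lambda>_. D))"
    using measurable_comp[OF measurable_component_singleton[OF kI] th] by (simp add: o_def)
  have Gk: "(\<lambda>\<omega>. GG (fst (jacsketch W \<theta> GG \<alpha> x0 J0 \<omega> k))) \<in> borel_measurable (PiM I (\<lambda>_. D))"
    using measurable_comp[OF IH(1) GG] by (simp add: o_def)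
  show ?case unfolding js_Suc Let_def fst_conv snd_conv
    by (intro conjI borel_measurable_add borel_measurable_diff borel_measurable_scaleR
        mm_meas mv_meas IH Pk tk Gk borel_measurable_const borel_measurable_divide)
qed

lemma psi_meas:
  fixes s :: "'b \<Rightarrow> (real^'d) \<times> (real^'n^'d)"
  assumes "(\<lambda>\<omega>. fst (s \<omega>)) \<in> borel_measurable M" "(\<lambda>\<omega>. snd (s \<omega>)) \<in> borel_measurable M"
  shows "(\<lambda>\<omega>. ennreal (Psi W GG xs \<alpha> L2 (s \<omega>))) \<in> borel_measurable M"
proof -
  have a: "(\<lambda>\<omega>. fst (s \<omega>) - xs) \<in> borel_measurable M"
    by (rule borel_measurable_diff[OF assms(1) borel_measurable_const])
  have b: "(\<lambda>\<omega>. snd (s \<omega>) - GG xs) \<in> borel_measurable M"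
    by (rule borel_measurable_diff[OF assms(2) borel_measurable_const])
  note [measurable] = a b wnorm_meas[OF b]
  have "(\<lambda>\<omega>. Psi W GG xs \<alpha> L2 (s \<omega>)) \<in> borel_measurable M"
    unfolding Psi_def by measurable
  then show ?thesis by simp
qed

lemma pow_le_eps:
  fixes t eps :: real and k :: nat
  assumes t0: "0 < t" and t1: "t \<le> 1" and e0: "0 < eps" and kk: "1 / t * ln (1 / eps) \<le> real k"
  shows "(1 - t) ^ k \<le> eps"
proof (cases "eps \<ge> 1")
  case True
  have "(1 - t) ^ k \<le> 1" using t0 t1 by (intro power_le_one) auto
  then show ?thesis using True by linarith
next
  case False
  have "(1 - t) ^ k \<le> exp (- t) ^ k"
    using t1 exp_ge_add_one_self[of "- t"] by (intro power_mono) auto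
  also have "\<dots> = exp (- (t * real k))" by (simp add: exp_of_nat_mult[symmetric] mult.commute)
  also have "\<dots> \<le> exp (- ln (1 / eps))"
  proof -
    have "ln (1 / eps) \<le> t * real k" using kk t0 by (simp add: field_simps)
    then show ?thesis by simp
  qed
  also have "\<dots> = eps" using e0 by (simp add: ln_div)
  finally show ?thesis .
qed

lemma inv_min:
  fixes a b m :: real
  assumes "0 < a" "0 < b" "0 < m"
  shows "1 / (m * min a b) = max (1 / (m * a)) (1 / (m * b))"
  using assms by (cases "a \<le> b") (auto simp: min_def max_def field_simps)

theorem theorem3p6:
  fixes f :: "'n::finite \<Rightarrow> real^'d::finite \<Rightarrow> real"
    and gf :: "'n \<Rightarrow> real^'d \<Rightarrow> real^'d"
    and xs :: "real^'d"
    and \<mu> L1 L2 \<alpha> :: real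
    and W :: "real^'n^'n"
    and D :: "(real^'t::finite^'n) measure"
    and \<theta> :: "real^'t^'n \<Rightarrow> real"
    and x0 :: "real^'d" and J0 :: "real^'n^'d"
  assumes grad: "\<And>i x. (f i has_derivative (\<lambda>h. gf i x \<bullet> h)) (at x)"
    and minimizer: "\<And>x. (1 / real CARD('n)) * (\<Sum>i\<in>UNIV. f i xs)
                        \<le> (1 / real CARD('n)) * (\<Sum>i\<in>UNIV. f i x)"
    and mu_pos: "\<mu> > 0"
    and quasi_sc: "\<And>x. (1 / real CARD('n)) * (\<Sum>i\<in>UNIV. f i xs)
                     \<ge> (1 / real CARD('n)) * (\<Sum>i\<in>UNIV. f i x)
                       + ((1 / real CARD('n)) *\<^sub>R (\<Sum>i\<in>UNIV. gf i x)) \<bullet> (xs - x)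
                       + \<mu> / 2 * (norm (xs - x))\<^sup>2"
    and W_pd: "pos_def_mat W"
    and D_prob: "prob_space D"
    and theta_rv: "\<theta> \<in> borel_measurable D"
    and int_thetaPie: "integrable D (\<lambda>S. \<theta> S *\<^sub>R (PiS W S *v ones))"
    and unbiased: "integral\<^sup>L D (\<lambda>S. \<theta> S *\<^sub>R (PiS W S *v ones)) = ones"
    and int_Pi: "integrable D (\<lambda>S. PiS W S)"
    and int_second: "integrable D (\<lambda>S. (\<theta> S)\<^sup>2 *\<^sub>R (PiS W S ** ones_mat ** transpose (PiS W S)))"
    and L1_pos: "L1 > 0" and L2_pos: "L2 > 0"
    and L1_bound: "\<And>x. (\<integral>\<^sup>+ S. ennreal ((norm (
                           (\<theta> S / real CARD('n)) *\<^sub>R (jac gf x ** PiS W S *v ones)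
                         - (\<theta> S / real CARD('n)) *\<^sub>R (jac gf xs ** PiS W S *v ones)))\<^sup>2) \<partial>D)
                 \<le> ennreal (2 * L1 * ((1 / real CARD('n)) * (\<Sum>i\<in>UNIV. f i x)
                                      - (1 / real CARD('n)) * (\<Sum>i\<in>UNIV. f i xs)))"
    and L2_bound: "\<And>x. (\<integral>\<^sup>+ S. ennreal ((wnorm W ((jac gf x - jac gf xs) ** PiS W S))\<^sup>2) \<partial>D)
                 \<le> ennreal (2 * L2 * ((1 / real CARD('n)) * (\<Sum>i\<in>UNIV. f i x)
                                      - (1 / real CARD('n)) * (\<Sum>i\<in>UNIV. f i xs)))"
    and kappa_pos: "kappa W D > 0"
  shows "(0 \<le> \<alpha> \<and> \<alpha> \<le> min (1 / (4 * L1))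
                         (kappa W D / (4 * L2 * rho W \<theta> D / (real CARD('n))\<^sup>2 + \<mu>)) \<longrightarrow>
            (\<forall>k. EPsi W \<theta> D (jac gf) xs \<alpha> L2 x0 J0 k
                   \<le> ennreal ((1 - \<mu> * \<alpha>) ^ k * Psi W (jac gf) xs \<alpha> L2 (x0, J0))))
       \<and> (\<alpha> = min (1 / (4 * L1)) (kappa W D / (4 * L2 * rho W \<theta> D / (real CARD('n))\<^sup>2 + \<mu>)) \<longrightarrow>
            (\<forall>k \<epsilon>. 0 < \<epsilon> \<longrightarrow>
               real k \<ge> max (4 * L1 / \<mu>)
                             (1 / kappa W D + 4 * rho W \<theta> D * L2 / (kappa W D * \<mu> * (real CARD('n))\<^sup>2))
                          * ln (1 / \<epsilon>)
               \<longrightarrow> EPsi W \<theta> D (jac gf) xs \<alpha> L2 x0 J0 k \<le> ennreal (\<epsilon> * Psi W (jac gf) xs \<alpha> L2 (x0, J0))))"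

proof -
  let ?n = "real CARD('n)"
  interpret js W D \<theta>
    unfolding js_def using W_pd D_prob int_thetaPie unbiased int_Pi int_second by blast
  interpret prob_space D by (rule D_prob)
  interpret product_sigma_finite "\<lambda>_::nat. D"
    unfolding product_sigma_finite_def using prob_space_imp_sigma_finite[OF D_prob] by blast
  define Dl where "Dl x = (1 / ?n) * (\<Sum>i\<in>UNIV. f i x) - (1 / ?n) * (\<Sum>i\<in>UNIV. f i xs)" for x
  have D0: "0 \<le> Dl x" for x using minimizer[of x] by (simp add: Dl_def)
  have mn: "(\<Sum>i\<in>UNIV. f i xs) \<le> (\<Sum>i\<in>UNIV. f i x)" for x
    using minimizer[of x] by (simp add: divide_le_cancel)
  have Gs0: "jac gf xs *v ones = 0"
    using fermat_sum[OF grad mn] by (simp add: jac_ones)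
  have qsc: "Dl x + \<mu>/2 * (norm (x - xs))\<^sup>2 \<le> (1/?n) * ((jac gf x *v ones) \<bullet> (x - xs))" for x
  proof -
    have "((1 / ?n) *\<^sub>R (\<Sum>i\<in>UNIV. gf i x)) \<bullet> (xs - x) = - ((1/?n) * ((jac gf x *v ones) \<bullet> (x - xs)))"
      by (simp add: jac_ones inner_diff_right diff_divide_distrib)
    moreover have "norm (xs - x) = norm (x - xs)" by (rule norm_minus_commute)
    ultimately show ?thesis using quasi_sc[of x] by (simp add: Dl_def)
  qed
  have rho0: "0 \<le> rho W \<theta> D"
    unfolding rho_def by (rule rho_nonneg[OF W_pd Mb_sym Mb_psd])
  define den where "den = 4 * L2 * rho W \<theta> D / ?n\<^sup>2 + \<mu>"
  have den0: "0 < den"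
  proof -
    have "0 \<le> 4 * L2 * rho W \<theta> D / ?n\<^sup>2" using rho0 L2_pos by simp
    then show ?thesis using mu_pos by (simp add: den_def)
  qed
  define abar where "abar = min (1 / (4 * L1)) (kappa W D / den)"
  have abar0: "0 < abar" using L1_pos kappa_pos den0 by (simp add: abar_def)
  have Gm: "jac gf \<in> borel_measurable borel"
    by (intro jac_meas grad_meas) (rule grad)
  have Pm: "(\<lambda>S. PiS W S) \<in> borel_measurable D" using int_Pi by (rule borel_measurable_integrable)
  have stp_eq: "jacsketch W \<theta> (jac gf) \<alpha>' x0 J0 \<omega> (Suc k) = stp \<alpha>' (jac gf) (jacsketch W \<theta> (jac gf) \<alpha>' x0 J0 \<omega> k) (\<omega> k)"
    for \<alpha>' \<omega> k by (simp only: js_Suc stp_def Let_def)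
  have step: "(\<integral>\<^sup>+S. ennreal (Psi W (jac gf) xs \<alpha>' L2 (stp \<alpha>' (jac gf) s S)) \<partial>D)
      \<le> ennreal ((1 - \<mu> * \<alpha>') * Psi W (jac gf) xs \<alpha>' L2 s)
    \<and> 0 \<le> (1 - \<mu> * \<alpha>') * Psi W (jac gf) xs \<alpha>' L2 s"
    if a0: "0 \<le> \<alpha>'" and ab: "\<alpha>' \<le> abar" for \<alpha>' s
  proof -
    have a1: "4 * \<alpha>' * L1 \<le> 1"
    proof -
      have "\<alpha>' \<le> 1 / (4 * L1)" using ab by (simp add: abar_def)
      then show ?thesis using L1_pos by (simp add: field_simps)
    qed
    have a2: "\<alpha>' * (4 * L2 * rho W \<theta> D / ?n\<^sup>2 + \<mu>) \<le> kappa W D"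
    proof -
      have "\<alpha>' \<le> kappa W D / den" using ab by (simp add: abar_def)
      then have "\<alpha>' * den \<le> kappa W D" using den0 by (simp add: le_divide_eq mult.commute)
      then show ?thesis by (simp only: den_def)
    qed
    obtain x J where s: "s = (x, J)" by (cases s)
    show ?thesis unfolding s
      using one_step[OF Gs0 qsc[of x] D0[of x] _ _ a0 a1 a2 L1_pos L2_pos, of J] L1_bound[of x] L2_bound[of x]
      by (simp add: Dl_def)
  qed
  have nonneg: "0 \<le> 1 - \<mu> * \<alpha>'" if a0: "0 \<le> \<alpha>'" and ab: "\<alpha>' \<le> abar" for \<alpha>'
  proof -
    have "0 \<le> (1 - \<mu> * \<alpha>') * Psi W (jac gf) xs \<alpha>' L2 (xs + ones, jac gf xs)"
      using step[OF a0 ab] by blast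
    moreover have "0 < Psi W (jac gf) xs \<alpha>' L2 (xs + ones, jac gf xs)"
    proof -
      have "ones \<noteq> (0::real^'d)" by (simp add: ones_def vec_eq_iff)
      then show ?thesis by (simp add: Psi_def wnorm_def trace_def)
    qed
    ultimately show ?thesis by (simp add: zero_le_mult_iff)
  qed
  have main: "\<forall>k. EPsi W \<theta> D (jac gf) xs \<alpha>' L2 x0 J0 k
                   \<le> ennreal ((1 - \<mu> * \<alpha>') ^ k * Psi W (jac gf) xs \<alpha>' L2 (x0, J0))"
    if a0: "0 \<le> \<alpha>'" and ab: "\<alpha>' \<le> abar" for \<alpha>'
  proof
    fix k
    let ?st = "\<lambda>k \<omega>. jacsketch W \<theta> (jac gf) \<alpha>' x0 J0 \<omega> k"
    let ?Ps = "\<lambda>s. Psi W (jac gf) xs \<alpha>' L2 s"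
    have nn1: "0 \<le> 1 - \<mu> * \<alpha>'" by (rule nonneg[OF a0 ab])
    have Ps0: "0 \<le> ?Ps s" for s using a0 L2_pos by (simp add: Psi_def)
    show "EPsi W \<theta> D (jac gf) xs \<alpha>' L2 x0 J0 k \<le> ennreal ((1 - \<mu> * \<alpha>') ^ k * ?Ps (x0, J0))"
    proof (induction k)
      case 0
      have "prob_space (PiM {..<0::nat} (\<lambda>_. D))" by (rule prob_space_PiM) (rule D_prob)
      then show ?case
        by (simp add: EPsi_def nn_integral_const prob_space.emeasure_space_1)
    next
      case (Suc k)
      have meas: "(\<lambda>\<omega>. ennreal (?Ps (?st (Suc k) \<omega>))) \<in> borel_measurable (PiM (insert k {..<k}) (\<lambda>_. D))"
      proof -
        have "{..<Suc k} \<subseteq> insert k {..<k}" by auto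
        note mm = js_meas[OF Gm Pm theta_rv this]
        show ?thesis by (intro psi_meas) (use mm in blast)+
      qed
      have mk: "(\<lambda>\<omega>. ennreal (?Ps (?st k \<omega>))) \<in> borel_measurable (PiM {..<k} (\<lambda>_. D))"
      proof -
        note mm = js_meas[OF Gm Pm theta_rv order_refl[of "{..<k}"]]
        show ?thesis by (intro psi_meas) (use mm in blast)+
      qed
      have "EPsi W \<theta> D (jac gf) xs \<alpha>' L2 x0 J0 (Suc k)
          = (\<integral>\<^sup>+\<omega>. ennreal (?Ps (?st (Suc k) \<omega>)) \<partial>PiM (insert k {..<k}) (\<lambda>_. D))"
        by (simp add: EPsi_def lessThan_Suc)
      also have "\<dots> = (\<integral>\<^sup>+x. (\<integral>\<^sup>+y. ennreal (?Ps (?st (Suc k) (x(k := y)))) \<partial>D) \<partial>PiM {..<k} (\<lambda>_. D))"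
        by (rule product_nn_integral_insert[OF _ _ meas]) auto
      also have "\<dots> \<le> (\<integral>\<^sup>+x. ennreal ((1 - \<mu> * \<alpha>') * ?Ps (?st k x)) \<partial>PiM {..<k} (\<lambda>_. D))"
      proof (rule nn_integral_mono)
        fix x
        have "?st (Suc k) (x(k := y)) = stp \<alpha>' (jac gf) (?st k x) y" for y
        proof -
          have e: "?st k (x(k := y)) = ?st k x" by (rule js_dep) simp
          show ?thesis by (simp only: stp_eq e fun_upd_same)
        qed
        then show "(\<integral>\<^sup>+y. ennreal (?Ps (?st (Suc k) (x(k := y)))) \<partial>D) \<le> ennreal ((1 - \<mu> * \<alpha>') * ?Ps (?st k x))"
          using step[OF a0 ab, of "?st k x"] by simp
      qed
      also have "\<dots> = ennreal (1 - \<mu> * \<alpha>') * (\<integral>\<^sup>+x. ennreal (?Ps (?st k x)) \<partial>PiM {..<k} (\<lambda>_. D))"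
        using nn1 Ps0 by (simp add: ennreal_mult nn_integral_cmult[OF mk])
      also have "\<dots> \<le> ennreal (1 - \<mu> * \<alpha>') * ennreal ((1 - \<mu> * \<alpha>') ^ k * ?Ps (x0, J0))"
        using Suc.IH by (simp add: EPsi_def mult_left_mono)
      also have "\<dots> = ennreal ((1 - \<mu> * \<alpha>') ^ Suc k * ?Ps (x0, J0))"
        using nn1 Ps0 by (simp add: ennreal_mult[symmetric] mult.assoc)
      finally show ?case .
    qed
  qed
  show ?thesis
  proof (intro conjI impI allI)
    assume "0 \<le> \<alpha> \<and> \<alpha> \<le> min (1 / (4 * L1)) (kappa W D / (4 * L2 * rho W \<theta> D / (real CARD('n))\<^sup>2 + \<mu>))"
    then show "EPsi W \<theta> D (jac gf) xs \<alpha> L2 x0 J0 k \<le> ennreal ((1 - \<mu> * \<alpha>) ^ k * Psi W (jac gf) xs \<alpha> L2 (x0, J0))" for k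
      using main[of \<alpha>] by (simp add: abar_def den_def)
  next
    fix k :: nat and \<epsilon> :: real
    assume aeq: "\<alpha> = min (1 / (4 * L1)) (kappa W D / (4 * L2 * rho W \<theta> D / (real CARD('n))\<^sup>2 + \<mu>))"
      and e0: "0 < \<epsilon>"
      and kb: "max (4 * L1 / \<mu>) (1 / kappa W D + 4 * rho W \<theta> D * L2 / (kappa W D * \<mu> * (real CARD('n))\<^sup>2)) * ln (1 / \<epsilon>) \<le> real k"
    have aab: "\<alpha> = abar" using aeq by (simp add: abar_def den_def)
    have a0: "0 \<le> \<alpha>" using abar0 aab by simp
    have bnd: "EPsi W \<theta> D (jac gf) xs \<alpha> L2 x0 J0 k \<le> ennreal ((1 - \<mu> * \<alpha>) ^ k * Psi W (jac gf) xs \<alpha> L2 (x0, J0))"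
      using main[of \<alpha>] a0 aab by simp
    have t1: "\<mu> * \<alpha> \<le> 1" using nonneg[of \<alpha>] a0 aab by simp
    have t0: "0 < \<mu> * \<alpha>" using mu_pos abar0 aab by simp
    have mx: "max (4 * L1 / \<mu>) (1 / kappa W D + 4 * rho W \<theta> D * L2 / (kappa W D * \<mu> * (real CARD('n))\<^sup>2)) = 1 / (\<mu> * \<alpha>)"
    proof -
      have "1 / (\<mu> * \<alpha>) = max (1 / (\<mu> * (1 / (4 * L1)))) (1 / (\<mu> * (kappa W D / den)))"
        unfolding aab abar_def by (rule inv_min) (use L1_pos kappa_pos den0 mu_pos in auto)
      also have "1 / (\<mu> * (1 / (4 * L1))) = 4 * L1 / \<mu>" by simp
      also have "1 / (\<mu> * (kappa W D / den)) = 1 / kappa W D + 4 * rho W \<theta> D * L2 / (kappa W D * \<mu> * (real CARD('n))\<^sup>2)"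
        using kappa_pos mu_pos by (simp add: den_def field_simps)
      finally show ?thesis by simp
    qed
    have "(1 - \<mu> * \<alpha>) ^ k \<le> \<epsilon>"
      by (rule pow_le_eps[OF t0 t1 e0]) (use kb mx in simp)
    moreover have "0 \<le> Psi W (jac gf) xs \<alpha> L2 (x0, J0)" using a0 L2_pos by (simp add: Psi_def)
    ultimately have "(1 - \<mu> * \<alpha>) ^ k * Psi W (jac gf) xs \<alpha> L2 (x0, J0) \<le> \<epsilon> * Psi W (jac gf) xs \<alpha> L2 (x0, J0)"
      by (rule mult_right_mono)
    then show "EPsi W \<theta> D (jac gf) xs \<alpha> L2 x0 J0 k \<le> ennreal (\<epsilon> * Psi W (jac gf) xs \<alpha> L2 (x0, J0))"
      using bnd order_trans ennreal_leI by blast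
  qed
qed

end
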